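(* Let $G$ be a maximal outerplanar graph and $\widetilde{G}$ its reduced graph. In every $B_1$-EPG representation of $G$ (if there is any), the paths corresponding to the three vertices of any triangle in $\widetilde{G}$ form a claw clique.
   Context: A graph is maximal outerplanar if it is outerplanar and adding any single new edge yields a non-outerplanar graph. $S_3$ is the graph with vertices $x_1,x_2,x_3,y_1,y_2,y_3$ and edges $\{x_1,x_2\},\{x_1,x_3\},\{x_2,x_3\},\{x_1,y_1\},\{x_2,y_1\},\{x_2,y_2\},\{x_3,y_2\},\{x_3,y_3\},\{x_1,y_3\}$; its central vertices are $x_1,x_2,x_3$ and its central edges are the three edges among them. A copy of $S_3$ in $G$ is an induced subgraph isomorphic to $S_3$. The reduced graph $\widetilde{G}$ is obtained by coloring, for every copy of $S_3$ in $G$, its central vertices and central edges, and then deleting from $G$ all uncolored vertices and uncolored edges. An EPG representation of a graph is a set of paths on a rectangular grid (sequences of grid points joined consecutively by grid edges), one per vertex, such that two vertices are adjacent iff their paths share a grid edge; it is a $B_1$-EPG representation if every path has at most one bend (point where a horizontal and a vertical grid edge of the path meet). A claw in the grid is a grid point together with three of the grid edges incident to it; a claw clique is the set of all paths that use two of the three edges of some such claw. *)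

theory Defs
  imports "HOL-Analysis.Analysis"
begin

definition simple_graph :: "'v set \<Rightarrow> 'v set set \<Rightarrow> bool" where
  "simple_graph V E \<longleftrightarrow> finite V \<and>
     (\<forall>e\<in>E. \<exists>u v. e = {u, v} \<and> u \<noteq> v \<and> u \<in> V \<and> v \<in> V)"

text \<open>The graph is outerplanar if it has such a drawing where every vertex lies on the
  boundary of the outer (unbounded) face, i.e. in the closure of the unbounded
  component of the complement of the drawing.\<close>

definition drawing_set :: "'v set \<Rightarrow> 'v set set \<Rightarrow> ('v \<Rightarrow> complex) \<Rightarrow> ('v set \<Rightarrow> real \<Rightarrow> complex) \<Rightarrow> complex set" where
  "drawing_set V E pos \<gamma> = pos ` V \<union> (\<Union>e\<in>E. path_image (\<gamma> e))"

definition plane_drawing :: "'v set \<Rightarrow> 'v set set \<Rightarrow> ('v \<Rightarrow> complex) \<Rightarrow> ('v set \<Rightarrow> real \<Rightarrow> complex) \<Rightarrow> bool" where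
  "plane_drawing V E pos \<gamma> \<longleftrightarrow>
     inj_on pos V \<and>
     (\<forall>e\<in>E. arc (\<gamma> e) \<and> {pathstart (\<gamma> e), pathfinish (\<gamma> e)} = pos ` e) \<and>
     (\<forall>e\<in>E. \<forall>v\<in>V. pos v \<in> path_image (\<gamma> e) \<longrightarrow> v \<in> e) \<and>
     (\<forall>e\<in>E. \<forall>e'\<in>E. e \<noteq> e' \<longrightarrow> path_image (\<gamma> e) \<inter> path_image (\<gamma> e') \<subseteq> pos ` (e \<inter> e'))"

definition outerplanar :: "'v set \<Rightarrow> 'v set set \<Rightarrow> bool" where
  "outerplanar V E \<longleftrightarrow>
     (\<exists>pos \<gamma>. plane_drawing V E pos \<gamma> \<and>
        (\<exists>x. x \<notin> drawing_set V E pos \<gamma> \<and>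
             \<not> bounded (connected_component_set (- drawing_set V E pos \<gamma>) x) \<and>
             (\<forall>v\<in>V. pos v \<in> closure (connected_component_set (- drawing_set V E pos \<gamma>) x))))"

definition maximal_outerplanar :: "'v set \<Rightarrow> 'v set set \<Rightarrow> bool" where
  "maximal_outerplanar V E \<longleftrightarrow> outerplanar V E \<and>
     (\<forall>u\<in>V. \<forall>v\<in>V. u \<noteq> v \<longrightarrow> {u, v} \<notin> E \<longrightarrow> \<not> outerplanar V (insert {u, v} E))"

text \<open>Labels: x1 = 0, x2 = 1, x3 = 2, y1 = 3, y2 = 4, y3 = 5.\<close>

definition S3_edges :: "nat set set" where
  "S3_edges = {{0,1},{0,2},{1,2},{0,3},{1,3},{1,4},{2,4},{2,5},{0,5}}"

definition S3_copy :: "'v set \<Rightarrow> 'v set set \<Rightarrow> (nat \<Rightarrow> 'v) \<Rightarrow> bool" where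
  "S3_copy V E f \<longleftrightarrow> inj_on f {0..<6} \<and> f ` {0..<6} \<subseteq> V \<and>
     (\<forall>i<6. \<forall>j<6. i \<noteq> j \<longrightarrow> ({f i, f j} \<in> E \<longleftrightarrow> {i, j} \<in> S3_edges))"

definition reduced_vertices :: "'v set \<Rightarrow> 'v set set \<Rightarrow> 'v set" where
  "reduced_vertices V E = {f i | f i. S3_copy V E f \<and> i < 3}"

definition reduced_edges :: "'v set \<Rightarrow> 'v set set \<Rightarrow> 'v set set" where
  "reduced_edges V E = {{f i, f j} | f i j. S3_copy V E f \<and> i < 3 \<and> j < 3 \<and> i \<noteq> j}"

type_synonym gpoint = "int \<times> int"

definition grid_adj :: "gpoint \<Rightarrow> gpoint \<Rightarrow> bool" where
  "grid_adj p q \<longleftrightarrow> \<bar>fst p - fst q\<bar> + \<bar>snd p - snd q\<bar> = 1"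

definition grid_path :: "gpoint list \<Rightarrow> bool" where
  "grid_path ps \<longleftrightarrow> ps \<noteq> [] \<and> distinct ps \<and>
     (\<forall>i. Suc i < length ps \<longrightarrow> grid_adj (ps ! i) (ps ! Suc i))"

definition path_edges :: "gpoint list \<Rightarrow> gpoint set set" where
  "path_edges ps = {{ps ! i, ps ! Suc i} | i. Suc i < length ps}"

definition bend_points :: "gpoint list \<Rightarrow> nat set" where
  "bend_points ps = {i. 0 < i \<and> Suc i < length ps \<and>
     ((snd (ps ! (i - 1)) = snd (ps ! i)) \<noteq> (snd (ps ! i) = snd (ps ! Suc i)))}"

definition bends :: "gpoint list \<Rightarrow> nat" where
  "bends ps = card (bend_points ps)"

definition EPG_rep :: "'v set \<Rightarrow> 'v set set \<Rightarrow> ('v \<Rightarrow> gpoint list) \<Rightarrow> bool" where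
  "EPG_rep V E P \<longleftrightarrow> (\<forall>v\<in>V. grid_path (P v)) \<and>
     (\<forall>u\<in>V. \<forall>v\<in>V. u \<noteq> v \<longrightarrow> ({u, v} \<in> E \<longleftrightarrow> path_edges (P u) \<inter> path_edges (P v) \<noteq> {}))"

definition B1_EPG_rep :: "'v set \<Rightarrow> 'v set set \<Rightarrow> ('v \<Rightarrow> gpoint list) \<Rightarrow> bool" where
  "B1_EPG_rep V E P \<longleftrightarrow> EPG_rep V E P \<and> (\<forall>v\<in>V. bends (P v) \<le> 1)"

definition is_claw :: "gpoint \<Rightarrow> gpoint \<Rightarrow> gpoint \<Rightarrow> gpoint \<Rightarrow> bool" where
  "is_claw c q1 q2 q3 \<longleftrightarrow> distinct [q1, q2, q3] \<and> grid_adj c q1 \<and> grid_adj c q2 \<and> grid_adj c q3"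

definition claw_edges :: "gpoint \<Rightarrow> gpoint \<Rightarrow> gpoint \<Rightarrow> gpoint \<Rightarrow> gpoint set set" where
  "claw_edges c q1 q2 q3 = {{c, q1}, {c, q2}, {c, q3}}"

text \<open>A path belongs to the claw clique of a claw iff it uses two of its three edges.\<close>

definition uses_two_claw_edges :: "gpoint list \<Rightarrow> gpoint \<Rightarrow> gpoint \<Rightarrow> gpoint \<Rightarrow> gpoint \<Rightarrow> bool" where
  "uses_two_claw_edges ps c q1 q2 q3 \<longleftrightarrow> card (path_edges ps \<inter> claw_edges c q1 q2 q3) = 2"

definition form_claw_clique :: "gpoint list set \<Rightarrow> bool" where
  "form_claw_clique Ps \<longleftrightarrow>
     (\<exists>c q1 q2 q3. is_claw c q1 q2 q3 \<and> (\<forall>ps\<in>Ps. uses_two_claw_edges ps c q1 q2 q3))"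

end

theory Submission
  imports Defs "HOL-Complex_Analysis.Winding_Numbers"
begin


lemma conn_in_inside:
  fixes K :: "complex set"
  assumes "closed K" "connected S" "S \<inter> K = {}" "S \<inter> inside K \<noteq> {}"
  shows "S \<subseteq> inside K"
proof -
  have "S \<subseteq> inside K \<union> outside K" using assms(3) inside_Un_outside by blast
  moreover have "inside K \<inter> outside K \<inter> S = {}"
    by (auto simp: inside_outside)
  ultimately have "inside K \<inter> S = {} \<or> outside K \<inter> S = {}"
    using connectedD[OF assms(2) open_inside[OF assms(1)] open_outside[OF assms(1)]] by blast
  then show ?thesis using assms(4) \<open>S \<subseteq> inside K \<union> outside K\<close> by blast
qed

lemma loop_facts:
  fixes c1 c2 :: "real \<Rightarrow> complex"
  assumes "arc c1" "arc c2" "pathstart c1 = A" "pathfinish c1 = B" "pathstart c2 = A" "pathfinish c2 = B"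
    "path_image c1 \<inter> path_image c2 = {A,B}"
  shows "simple_path (c1 +++ reversepath c2)" "pathfinish (c1 +++ reversepath c2) = pathstart (c1 +++ reversepath c2)"
    "path_image (c1 +++ reversepath c2) = path_image c1 \<union> path_image c2"
    "path (c1 +++ reversepath c2)"
    "\<And>p. p \<notin> path_image c1 \<union> path_image c2 \<Longrightarrow> winding_number (c1 +++ reversepath c2) p = winding_number c1 p - winding_number c2 p"
proof -
  show s: "simple_path (c1 +++ reversepath c2)"
    using assms by (intro simple_path_join_loop) (auto simp: arc_reversepath)
  show "pathfinish (c1 +++ reversepath c2) = pathstart (c1 +++ reversepath c2)" using assms by simp
  show "path_image (c1 +++ reversepath c2) = path_image c1 \<union> path_image c2"
    using assms by (simp add: path_image_join)
  show "path (c1 +++ reversepath c2)" using s simple_path_imp_path by blast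
  fix p assume "p \<notin> path_image c1 \<union> path_image c2"
  then show "winding_number (c1 +++ reversepath c2) p = winding_number c1 p - winding_number c2 p"
    using assms by (simp add: winding_number_join winding_number_reversepath arc_imp_path)
qed

lemma arc_mid:
  assumes "arc c"
  shows "c (1/2) \<in> path_image c - {pathstart c, pathfinish c}"
proof -
  have inj: "inj_on c {0..1}" using assms arc_def by blast
  have "c (1/2) \<noteq> c 0" using inj_onD[OF inj, of "1/2" 0] by auto
  moreover have "c (1/2) \<noteq> c 1" using inj_onD[OF inj, of "1/2" 1] by auto
  ultimately show ?thesis by (auto simp: path_image_def pathstart_def pathfinish_def)
qed


lemma closure_open_meet:
  fixes I Op :: "complex set"
  assumes "q \<in> closure I" "open Op" "q \<in> Op"
  obtains p where "p \<in> I" "p \<in> Op"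
  using open_Int_closure_eq_empty[of Op I] assms by blast

lemma theta:
  fixes c1 c2 c3 :: "real \<Rightarrow> complex"
  assumes arcs: "arc c1" "arc c2" "arc c3"
    and ends: "pathstart c1 = A" "pathfinish c1 = B" "pathstart c2 = A" "pathfinish c2 = B"
      "pathstart c3 = A" "pathfinish c3 = B"
    and i12: "path_image c1 \<inter> path_image c2 = {A,B}"
    and i13: "path_image c1 \<inter> path_image c3 = {A,B}"
    and i23: "path_image c2 \<inter> path_image c3 = {A,B}"
  shows "path_image c3 \<inter> inside (path_image c1 \<union> path_image c2) \<noteq> {} \<or>
         path_image c2 \<inter> inside (path_image c1 \<union> path_image c3) \<noteq> {} \<or>
         path_image c1 \<inter> inside (path_image c2 \<union> path_image c3) \<noteq> {}"
proof (rule ccontr)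
  assume "\<not> ?thesis"
  then have n3: "path_image c3 \<inter> inside (path_image c1 \<union> path_image c2) = {}"
    and n2: "path_image c2 \<inter> inside (path_image c1 \<union> path_image c3) = {}"
    and n1: "path_image c1 \<inter> inside (path_image c2 \<union> path_image c3) = {}" by auto
  let ?K12 = "path_image c1 \<union> path_image c2"
  let ?K13 = "path_image c1 \<union> path_image c3"
  let ?K23 = "path_image c2 \<union> path_image c3"
  let ?J12 = "c1 +++ reversepath c2"
  let ?J13 = "c1 +++ reversepath c3"
  let ?J23 = "c2 +++ reversepath c3"
  note L12 = loop_facts[OF arcs(1,2) ends(1-4) i12]
  note L13 = loop_facts[OF arcs(1,3) ends(1,2,5,6) i13]
  note L23 = loop_facts[OF arcs(2,3) ends(3-6) i23]
  have cl: "closed ?K12" "closed ?K13" "closed ?K23"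
    using arcs by (auto intro!: closed_Un closed_path_image arc_imp_path)
  have AB12: "A \<in> ?K12" "B \<in> ?K12" using i12 by auto
  have o2: "c2 (1/2) \<in> outside ?K13"
  proof -
    have "c2 (1/2) \<in> path_image c2 - {A, B}" using arc_mid[OF arcs(2)] ends by simp
    then have "c2 (1/2) \<notin> ?K13" "c2 (1/2) \<notin> inside ?K13" using i12 i23 n2 by auto
    then show ?thesis by (simp add: outside_inside)
  qed
  have o1: "c1 (1/2) \<in> outside ?K23"
  proof -
    have "c1 (1/2) \<in> path_image c1 - {A, B}" using arc_mid[OF arcs(1)] ends by simp
    then have "c1 (1/2) \<notin> ?K23" "c1 (1/2) \<notin> inside ?K23" using i12 i13 n1 by auto
    then show ?thesis by (simp add: outside_inside)
  qed
  note JI12 = Jordan_inside_outside[OF L12(1,2)]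
  have fr: "frontier (inside ?K12) = ?K12" using JI12 L12(3) by simp
  have "c2 (1/2) \<in> ?K12" using arc_mid[OF arcs(2)] by auto
  then have "c2 (1/2) \<in> closure (inside ?K12)" using fr frontier_def by auto
  then obtain p where p: "p \<in> inside ?K12" "p \<in> outside ?K13"
    using closure_open_meet[OF _ open_outside[OF cl(2)] o2] by blast
  have "c1 (1/2) \<in> ?K12" using arc_mid[OF arcs(1)] by auto
  then have "c1 (1/2) \<in> closure (inside ?K12)" using fr frontier_def by auto
  then obtain p' where p': "p' \<in> inside ?K12" "p' \<in> outside ?K23"
    using closure_open_meet[OF _ open_outside[OF cl(3)] o1] by blast
  have c3I: "path_image c3 \<inter> inside ?K12 = {}" using n3 by blast
  have disI13: "inside ?K12 \<inter> ?K13 = {}" using c3I inside_no_overlap by blast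
  have disI23: "inside ?K12 \<inter> ?K23 = {}" using c3I inside_no_overlap by blast
  have connI: "connected (inside ?K12)" using JI12 L12(3) by simp
  have w13: "winding_number ?J13 p' = winding_number ?J13 p"
    using winding_number_constant[OF L13(4) L13(2) connI] disI13 L13(3) p p'
    unfolding constant_on_def by (metis Int_commute)
  have w23: "winding_number ?J23 p = winding_number ?J23 p'"
    using winding_number_constant[OF L23(4) L23(2) connI] disI23 L23(3) p p'
    unfolding constant_on_def by (metis Int_commute)
  have "winding_number ?J13 p = 0"
    using winding_number_zero_in_outside[OF L13(4) L13(2)] p L13(3) by simp
  moreover have "winding_number ?J23 p' = 0"
    using winding_number_zero_in_outside[OF L23(4) L23(2)] p' L23(3) by simp
  moreover have pn: "p \<notin> ?K12" "p \<notin> ?K13" "p \<notin> ?K23"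
    using p disI13 disI23 inside_no_overlap by blast+
  ultimately have "winding_number ?J12 p = 0"
    using L12(5)[OF pn(1)] L13(5)[OF pn(2)] L23(5)[OF pn(3)] w13 w23 by simp
  moreover have "winding_number ?J12 p = 1 \<or> winding_number ?J12 p = -1"
    using simple_closed_path_winding_number_inside[OF L12(1)] p L12(3) by metis
  ultimately show False by simp
qed


lemma final_contra:
  fixes cx cy cz :: "real \<Rightarrow> complex"
  assumes "arc cz" "pathstart cz = A" "pathfinish cz = B"
    and "path_image cx \<inter> path_image cz = {A,B}" "path_image cy \<inter> path_image cz = {A,B}"
    and "closed (path_image cx \<union> path_image cy)" "bounded (path_image cx \<union> path_image cy)"
    and "zpt \<in> path_image cz - {A,B}"
    and "connected U" "\<not> bounded U" "U \<inter> (path_image cx \<union> path_image cy) = {}" "zpt \<in> closure U"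
    and "path_image cz \<inter> inside (path_image cx \<union> path_image cy) \<noteq> {}"
  shows False
proof -
  let ?K = "path_image cx \<union> path_image cy"
  let ?S = "path_image cz - {A,B}"
  have "connected ?S" using connected_simple_path_endless[of cz] assms(1-3) arc_imp_simple_path by auto
  moreover have "?S \<inter> ?K = {}" using assms(4,5) by auto
  moreover have "?S \<inter> inside ?K \<noteq> {}"
  proof -
    have "A \<in> ?K" "B \<in> ?K" using assms(4) by auto
    then have "A \<notin> inside ?K" "B \<notin> inside ?K" using inside_no_overlap by blast+
    then show ?thesis using assms(13) by blast
  qed
  ultimately have "?S \<subseteq> inside ?K" using conn_in_inside[OF assms(6)] by blast
  then have zi: "zpt \<in> inside ?K" using assms(8) by blast
  have "U \<inter> inside ?K = {}"
  proof (rule ccontr)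
    assume "U \<inter> inside ?K \<noteq> {}"
    then have "U \<subseteq> inside ?K" using conn_in_inside[OF assms(6,9)] assms(11) by blast
    then have "bounded U" using bounded_inside[OF assms(7)] bounded_subset by blast
    then show False using assms(10) by blast
  qed
  then have "inside ?K \<inter> closure U = {}"
    using open_Int_closure_eq_empty[OF open_inside[OF assms(6)]] by blast
  then show False using zi assms(12) by blast
qed

definition oarc :: "('v set \<Rightarrow> real \<Rightarrow> complex) \<Rightarrow> ('v \<Rightarrow> complex) \<Rightarrow> 'v \<Rightarrow> 'v \<Rightarrow> real \<Rightarrow> complex" where
  "oarc \<gamma> pos s t = (if pathstart (\<gamma> {s,t}) = pos s then \<gamma> {s,t} else reversepath (\<gamma> {s,t}))"

lemma oarc:
  assumes "plane_drawing V E pos \<gamma>" "{s,t} \<in> E"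
  shows "arc (oarc \<gamma> pos s t)" "pathstart (oarc \<gamma> pos s t) = pos s" "pathfinish (oarc \<gamma> pos s t) = pos t"
    "path_image (oarc \<gamma> pos s t) = path_image (\<gamma> {s,t})" "pos s \<noteq> pos t" "s \<noteq> t"
proof -
  let ?g = "\<gamma> {s,t}"
  have a: "arc ?g" and e: "{pathstart ?g, pathfinish ?g} = {pos s, pos t}"
    using assms unfolding plane_drawing_def by auto
  have d: "pathstart ?g \<noteq> pathfinish ?g" using a arc_distinct_ends by metis
  show ps: "pos s \<noteq> pos t" using d e by (metis doubleton_eq_iff)
  then show "s \<noteq> t" by blast
  have "(pathstart ?g = pos s \<and> pathfinish ?g = pos t) \<or> (pathstart ?g = pos t \<and> pathfinish ?g = pos s)"
    using e ps by (metis doubleton_eq_iff)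
  then show "arc (oarc \<gamma> pos s t)" "pathstart (oarc \<gamma> pos s t) = pos s" "pathfinish (oarc \<gamma> pos s t) = pos t"
    "path_image (oarc \<gamma> pos s t) = path_image (\<gamma> {s,t})"
    using a ps by (auto simp: oarc_def arc_reversepath)
qed

lemma edge_meet:
  assumes "plane_drawing V E pos \<gamma>" "e \<in> E" "e' \<in> E" "e \<noteq> e'"
  shows "path_image (\<gamma> e) \<inter> path_image (\<gamma> e') \<subseteq> pos ` (e \<inter> e')"
  using assms unfolding plane_drawing_def by blast

lemma K23_free:
  assumes op: "outerplanar V E" and V: "u \<in> V" "v \<in> V" "x \<in> V" "y \<in> V" "z \<in> V"
    and d: "u \<noteq> v" "x \<noteq> y" "x \<noteq> z" "y \<noteq> z"
    and E: "{u,x} \<in> E" "{x,v} \<in> E" "{u,y} \<in> E" "{y,v} \<in> E" "{u,z} \<in> E" "{z,v} \<in> E"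
  shows False
proof -
  obtain pos \<gamma> x0 where pd: "plane_drawing V E pos \<gamma>"
    and x0: "x0 \<notin> drawing_set V E pos \<gamma>"
    and unb: "\<not> bounded (connected_component_set (- drawing_set V E pos \<gamma>) x0)"
    and cl: "\<forall>w\<in>V. pos w \<in> closure (connected_component_set (- drawing_set V E pos \<gamma>) x0)"
    using op unfolding outerplanar_def by blast
  define U where "U = connected_component_set (- drawing_set V E pos \<gamma>) x0"
  have injp: "inj_on pos V" using pd plane_drawing_def by blast
  have Uc: "connected U" unfolding U_def by (rule connected_connected_component)
  have Ud: "U \<inter> drawing_set V E pos \<gamma> = {}" unfolding U_def using connected_component_subset by blast
  have img: "path_image (\<gamma> e) \<subseteq> drawing_set V E pos \<gamma>" if "e \<in> E" for e
    using that unfolding drawing_set_def by blast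
  note O1 = oarc[OF pd E(1)] and O2 = oarc[OF pd E(2)] and O3 = oarc[OF pd E(3)]
    and O4 = oarc[OF pd E(4)] and O5 = oarc[OF pd E(5)] and O6 = oarc[OF pd E(6)]
  have ne: "u \<noteq> x" "x \<noteq> v" "u \<noteq> y" "y \<noteq> v" "u \<noteq> z" "z \<noteq> v" using O1 O2 O3 O4 O5 O6 by auto
  have ip: "pos a \<noteq> pos b" if "a \<in> V" "b \<in> V" "a \<noteq> b" for a b
    using injp that inj_on_def by metis
  define cx where "cx = oarc \<gamma> pos u x +++ oarc \<gamma> pos x v"
  define cy where "cy = oarc \<gamma> pos u y +++ oarc \<gamma> pos y v"
  define cz where "cz = oarc \<gamma> pos u z +++ oarc \<gamma> pos z v"
  have mw: "path_image (\<gamma> {u,w}) \<inter> path_image (\<gamma> {w,v}) \<subseteq> {pos w}"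
    if "{u,w} \<in> E" "{w,v} \<in> E" "u \<noteq> w" "w \<noteq> v" for w
  proof -
    have "{u,w} \<noteq> {w,v}" using d that by (metis doubleton_eq_iff)
    moreover have "{u,w} \<inter> {w,v} = {w}" using d that by auto
    ultimately show ?thesis using edge_meet[OF pd that(1,2)] by auto
  qed
  have cw: "arc (oarc \<gamma> pos u w +++ oarc \<gamma> pos w v) \<and> pathstart (oarc \<gamma> pos u w +++ oarc \<gamma> pos w v) = pos u
     \<and> pathfinish (oarc \<gamma> pos u w +++ oarc \<gamma> pos w v) = pos v
     \<and> path_image (oarc \<gamma> pos u w +++ oarc \<gamma> pos w v) = path_image (\<gamma> {u,w}) \<union> path_image (\<gamma> {w,v})"
    if "{u,w} \<in> E" "{w,v} \<in> E" "u \<noteq> w" "w \<noteq> v" for w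
  proof -
    note A = oarc[OF pd that(1)] and B = oarc[OF pd that(2)]
    have "arc (oarc \<gamma> pos u w +++ oarc \<gamma> pos w v)"
      using A B mw[OF that] by (intro arc_join) auto
    then show ?thesis using A B by (simp add: path_image_join)
  qed
  note CX = cw[OF E(1,2) ne(1,2), folded cx_def]
  note CY = cw[OF E(3,4) ne(3,4), folded cy_def]
  note CZ = cw[OF E(5,6) ne(5,6), folded cz_def]
  have cross: "path_image (\<gamma> {u,a}) \<inter> path_image (\<gamma> {u,b}) \<subseteq> {pos u}
      \<and> path_image (\<gamma> {u,a}) \<inter> path_image (\<gamma> {b,v}) = {}
      \<and> path_image (\<gamma> {a,v}) \<inter> path_image (\<gamma> {u,b}) = {}
      \<and> path_image (\<gamma> {a,v}) \<inter> path_image (\<gamma> {b,v}) \<subseteq> {pos v}"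
    if "{u,a} \<in> E" "{a,v} \<in> E" "{u,b} \<in> E" "{b,v} \<in> E" "a \<noteq> b"
       "u \<noteq> a" "a \<noteq> v" "u \<noteq> b" "b \<noteq> v" for a b
  proof -
    have 1: "{u,a} \<noteq> {u,b}" "{u,a} \<noteq> {b,v}" "{a,v} \<noteq> {u,b}" "{a,v} \<noteq> {b,v}"
      using that d by (auto simp: doubleton_eq_iff)
    have 2: "{u,a} \<inter> {u,b} = {u}" "{u,a} \<inter> {b,v} = {}" "{a,v} \<inter> {u,b} = {}" "{a,v} \<inter> {b,v} = {v}"
      using that d by auto
    show ?thesis
      using edge_meet[OF pd that(1) that(3) 1(1)] edge_meet[OF pd that(1) that(4) 1(2)]
        edge_meet[OF pd that(2) that(3) 1(3)] edge_meet[OF pd that(2) that(4) 1(4)] 2 by auto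
  qed
  have meet: "path_image (oarc \<gamma> pos u a +++ oarc \<gamma> pos a v) \<inter> path_image (oarc \<gamma> pos u b +++ oarc \<gamma> pos b v) = {pos u, pos v}"
    if "{u,a} \<in> E" "{a,v} \<in> E" "{u,b} \<in> E" "{b,v} \<in> E" "a \<noteq> b"
       "u \<noteq> a" "a \<noteq> v" "u \<noteq> b" "b \<noteq> v" for a b
  proof -
    note Ca = cw[OF that(1,2,6,7)] and Cb = cw[OF that(3,4,8,9)]
    have "pos u \<in> path_image (\<gamma> {u,a})" "pos u \<in> path_image (\<gamma> {u,b})"
         "pos v \<in> path_image (\<gamma> {a,v})" "pos v \<in> path_image (\<gamma> {b,v})"
      using oarc[OF pd that(1)] oarc[OF pd that(3)] oarc[OF pd that(2)] oarc[OF pd that(4)]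
      by (metis pathstart_in_path_image pathfinish_in_path_image)+
    then show ?thesis using Ca Cb cross[OF that] by auto
  qed
  have Mxy: "path_image cx \<inter> path_image cy = {pos u, pos v}" unfolding cx_def cy_def
    using meet[OF E(1-4) d(2) ne(1-4)] .
  have Mxz: "path_image cx \<inter> path_image cz = {pos u, pos v}" unfolding cx_def cz_def
    using meet[OF E(1,2,5,6) d(3) ne(1,2,5,6)] .
  have Myz: "path_image cy \<inter> path_image cz = {pos u, pos v}" unfolding cy_def cz_def
    using meet[OF E(3-6) d(4) ne(3-6)] .
  have pu: "pos u \<noteq> pos v" using ip V d by blast
  have th: "path_image cz \<inter> inside (path_image cx \<union> path_image cy) \<noteq> {} \<or>
         path_image cy \<inter> inside (path_image cx \<union> path_image cz) \<noteq> {} \<or>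
         path_image cx \<inter> inside (path_image cy \<union> path_image cz) \<noteq> {}"
    using theta[of cx cy cz "pos u" "pos v"] CX CY CZ Mxy Mxz Myz by blast
  have closedK: "closed (path_image a \<union> path_image b)" "bounded (path_image a \<union> path_image b)"
    if "arc a" "arc b" for a b :: "real \<Rightarrow> complex"
    using that by (auto intro!: closed_Un closed_path_image bounded_Un bounded_path_image arc_imp_path)
  have UK: "U \<inter> (path_image a \<union> path_image b) = {}"
    if "a = cx \<or> a = cy \<or> a = cz" "b = cx \<or> b = cy \<or> b = cz" for a b
  proof -
    have "path_image cx \<subseteq> drawing_set V E pos \<gamma>" "path_image cy \<subseteq> drawing_set V E pos \<gamma>"
      "path_image cz \<subseteq> drawing_set V E pos \<gamma>"
      using CX CY CZ img E by auto
    then show ?thesis using that Ud by blast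
  qed
  have unbU: "\<not> bounded U" using unb U_def by simp
  have clU: "pos w \<in> closure U" if "w \<in> V" for w using cl that U_def by simp
  have wx: "pos x \<in> path_image cx - {pos u, pos v}"
  proof -
    have "pos x \<in> path_image (\<gamma> {u,x})" using O1 by (metis pathfinish_in_path_image)
    then show ?thesis using CX ip V ne by auto
  qed
  have wy: "pos y \<in> path_image cy - {pos u, pos v}"
  proof -
    have "pos y \<in> path_image (\<gamma> {u,y})" using O3 by (metis pathfinish_in_path_image)
    then show ?thesis using CY ip V ne by auto
  qed
  have wz: "pos z \<in> path_image cz - {pos u, pos v}"
  proof -
    have "pos z \<in> path_image (\<gamma> {u,z})" using O5 by (metis pathfinish_in_path_image)
    then show ?thesis using CZ ip V ne by auto
  qed
  have ax: "arc cx" "pathstart cx = pos u" "pathfinish cx = pos v" using CX by simp_all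
  have ay: "arc cy" "pathstart cy = pos u" "pathfinish cy = pos v" using CY by simp_all
  have az: "arc cz" "pathstart cz = pos u" "pathfinish cz = pos v" using CZ by simp_all
  have Myx: "path_image cy \<inter> path_image cx = {pos u, pos v}" using Mxy by (simp add: Int_commute)
  have Mzx: "path_image cz \<inter> path_image cx = {pos u, pos v}" using Mxz by (simp add: Int_commute)
  have Mzy: "path_image cz \<inter> path_image cy = {pos u, pos v}" using Myz by (simp add: Int_commute)
  from th show False
  proof (elim disjE)
    assume h: "path_image cz \<inter> inside (path_image cx \<union> path_image cy) \<noteq> {}"
    show False
      by (rule final_contra[OF az Mxz Myz closedK[OF ax(1) ay(1)] wz Uc unbU UK[of cx cy] clU[OF V(5)] h]) simp_all
  next
    assume h: "path_image cy \<inter> inside (path_image cx \<union> path_image cz) \<noteq> {}"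
    show False
      by (rule final_contra[OF ay Mxy Mzy closedK[OF ax(1) az(1)] wy Uc unbU UK[of cx cz] clU[OF V(4)] h]) simp_all
  next
    assume h: "path_image cx \<inter> inside (path_image cy \<union> path_image cz) \<noteq> {}"
    show False
      by (rule final_contra[OF ax Myx Mzx closedK[OF ay(1) az(1)] wx Uc unbU UK[of cy cz] clU[OF V(3)] h]) simp_all
  qed
qed


definition S3like :: "'v set \<Rightarrow> 'v set set \<Rightarrow> 'v \<Rightarrow> 'v \<Rightarrow> 'v \<Rightarrow> 'v \<Rightarrow> 'v \<Rightarrow> 'v \<Rightarrow> bool" where
  "S3like V E a b c p q s \<longleftrightarrow> a \<in> V \<and> b \<in> V \<and> c \<in> V \<and> p \<in> V \<and> q \<in> V \<and> s \<in> V \<and>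
     distinct [a,b,c,p,q,s] \<and>
     {a,b} \<in> E \<and> {b,c} \<in> E \<and> {a,c} \<in> E \<and>
     {p,a} \<in> E \<and> {p,b} \<in> E \<and> {p,c} \<notin> E \<and>
     {q,b} \<in> E \<and> {q,c} \<in> E \<and> {q,a} \<notin> E \<and>
     {s,c} \<in> E \<and> {s,a} \<in> E \<and> {s,b} \<notin> E \<and>
     {p,q} \<notin> E \<and> {q,s} \<notin> E \<and> {p,s} \<notin> E"

lemma S3like_rot: "S3like V E a b c p q s \<Longrightarrow> S3like V E b c a q s p"
  unfolding S3like_def by (auto simp: insert_commute)

lemma S3like_swap: "S3like V E a b c p q s \<Longrightarrow> S3like V E b a c p s q"
  unfolding S3like_def by (auto simp: insert_commute)

lemma S3_edges_iff:
  "{i,j} \<in> S3_edges \<longleftrightarrow> {i,j} \<in> {{0,1},{0,2},{1,2},{0,3},{1,3},{1,4},{2,4},{2,5},{0,5::nat}}"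
  by (simp add: S3_edges_def)

lemma copy_S3like:
  assumes "S3_copy V E f"
  shows "S3like V E (f 0) (f 1) (f 2) (f 3) (f 4) (f 5)"
proof -
  have inj: "inj_on f {0..<6}" and sub: "f ` {0..<6} \<subseteq> V"
    and ed: "\<And>i j. i < 6 \<Longrightarrow> j < 6 \<Longrightarrow> i \<noteq> j \<Longrightarrow> ({f i, f j} \<in> E \<longleftrightarrow> {i, j} \<in> S3_edges)"
    using assms unfolding S3_copy_def by auto
  have "distinct (map f [0..<6])" using inj by (simp add: distinct_map)
  moreover have "[0..<6] = [0,1,2,3,4,5::nat]" by (simp add: upt_rec)
  ultimately have d: "distinct [f 0, f 1, f 2, f 3, f 4, f (5::nat)]" by simp
  have v: "f 0 \<in> V" "f 1 \<in> V" "f 2 \<in> V" "f 3 \<in> V" "f 4 \<in> V" "f 5 \<in> V" using sub by auto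
  have e0: "{f 0, f 1} \<in> E" using ed[of 0 1] by (simp add: S3_edges_def doubleton_eq_iff)
  have e1: "{f 1, f 2} \<in> E" using ed[of 1 2] by (simp add: S3_edges_def doubleton_eq_iff)
  have e2: "{f 0, f 2} \<in> E" using ed[of 0 2] by (simp add: S3_edges_def doubleton_eq_iff)
  have e3: "{f 3, f 0} \<in> E" using ed[of 3 0] by (simp add: S3_edges_def doubleton_eq_iff)
  have e4: "{f 3, f 1} \<in> E" using ed[of 3 1] by (simp add: S3_edges_def doubleton_eq_iff)
  have e5: "{f 4, f 1} \<in> E" using ed[of 4 1] by (simp add: S3_edges_def doubleton_eq_iff)
  have e6: "{f 4, f 2} \<in> E" using ed[of 4 2] by (simp add: S3_edges_def doubleton_eq_iff)
  have e7: "{f 5, f 2} \<in> E" using ed[of 5 2] by (simp add: S3_edges_def doubleton_eq_iff)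
  have e8: "{f 5, f 0} \<in> E" using ed[of 5 0] by (simp add: S3_edges_def doubleton_eq_iff)
  have e9: "{f 3, f 2} \<notin> E" using ed[of 3 2] by (simp add: S3_edges_def doubleton_eq_iff)
  have e10: "{f 4, f 0} \<notin> E" using ed[of 4 0] by (simp add: S3_edges_def doubleton_eq_iff)
  have e11: "{f 5, f 1} \<notin> E" using ed[of 5 1] by (simp add: S3_edges_def doubleton_eq_iff)
  have e12: "{f 3, f 4} \<notin> E" using ed[of 3 4] by (simp add: S3_edges_def doubleton_eq_iff)
  have e13: "{f 4, f 5} \<notin> E" using ed[of 4 5] by (simp add: S3_edges_def doubleton_eq_iff)
  have e14: "{f 3, f 5} \<notin> E" using ed[of 3 5] by (simp add: S3_edges_def doubleton_eq_iff)
  show ?thesis unfolding S3like_def using v d e0 e1 e2 e3 e4 e5 e6 e7 e8 e9 e10 e11 e12 e13 e14 by simp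
qed

lemma redge_S3like:
  assumes "{a,b} \<in> reduced_edges V E"
  shows "\<exists>d p q s. S3like V E a b d p q s"
proof -
  obtain f i j where f: "S3_copy V E f" "i < 3" "j < 3" "i \<noteq> j" "{a,b} = {f i, f j}"
    using assms unfolding reduced_edges_def by blast
  have S: "S3like V E (f 0) (f 1) (f 2) (f 3) (f 4) (f 5)" using copy_S3like[OF f(1)] .
  have all: "\<exists>d p q s. S3like V E (f i) (f j) d p q s"
  proof -
    have "i = 0 \<and> j = 1 \<or> i = 1 \<and> j = 0 \<or> i = 1 \<and> j = 2 \<or> i = 2 \<and> j = 1 \<or> i = 0 \<and> j = 2 \<or> i = 2 \<and> j = 0"
      using f(2-4) by auto
    then show ?thesis
      using S S3like_swap[OF S] S3like_rot[OF S] S3like_swap[OF S3like_rot[OF S]]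
        S3like_rot[OF S3like_rot[OF S]] S3like_swap[OF S3like_rot[OF S3like_rot[OF S]]]
      by (elim disjE) auto
  qed
  then obtain d p q s where "S3like V E (f i) (f j) d p q s" by blast
  moreover have "(a = f i \<and> b = f j) \<or> (a = f j \<and> b = f i)" using f(5) by (metis doubleton_eq_iff)
  ultimately show ?thesis
  proof (elim disjE)
    assume "S3like V E (f i) (f j) d p q s" "a = f i \<and> b = f j"
    then show ?thesis by blast
  next
    assume "S3like V E (f i) (f j) d p q s" "a = f j \<and> b = f i"
    then show ?thesis using S3like_swap[of V E "f i" "f j" d p q s] by auto
  qed
qed

definition K23free :: "'v set \<Rightarrow> 'v set set \<Rightarrow> bool" where
  "K23free V E \<longleftrightarrow> (\<forall>u\<in>V. \<forall>v\<in>V. \<forall>x\<in>V. \<forall>y\<in>V. \<forall>z\<in>V. u \<noteq> v \<longrightarrow> x \<noteq> y \<longrightarrow> x \<noteq> z \<longrightarrow> y \<noteq> z \<longrightarrow>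
     {u,x} \<in> E \<longrightarrow> {x,v} \<in> E \<longrightarrow> {u,y} \<in> E \<longrightarrow> {y,v} \<in> E \<longrightarrow> {u,z} \<in> E \<longrightarrow> {z,v} \<in> E \<longrightarrow> False)"

lemma K23D:
  assumes "K23free V E" "u \<in> V" "v \<in> V" "x \<in> V" "y \<in> V" "z \<in> V" "u \<noteq> v" "x \<noteq> y" "x \<noteq> z" "y \<noteq> z"
    "{u,x} \<in> E" "{x,v} \<in> E" "{u,y} \<in> E" "{y,v} \<in> E" "{u,z} \<in> E" "{z,v} \<in> E"
  shows False
  using assms unfolding K23free_def by blast

lemma ear_is_c:
  assumes K: "K23free V E" and S: "S3like V E a b d p q s" and c: "c \<in> V" "{a,c} \<in> E" "{b,c} \<in> E" "d \<noteq> c"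
  shows "p = c"
proof (rule ccontr)
  assume pc: "p \<noteq> c"
  from S have V: "a \<in> V" "b \<in> V" "d \<in> V" "p \<in> V" and ds: "a \<noteq> b" "d \<noteq> p"
    and e: "{a,d} \<in> E" "{b,d} \<in> E" "{p,a} \<in> E" "{p,b} \<in> E"
    unfolding S3like_def by auto
  have e2: "{c,b} \<in> E" "{d,b} \<in> E" "{a,p} \<in> E" using e c by (auto simp: insert_commute)
  show False using K23D[OF K V(1,2) c(1) V(3,4) ds(1) c(4)[symmetric] pc[symmetric] ds(2) c(2) e2(1) e(1) e2(2) e2(3) e(4)] .
qed

lemma ctr_nonadj:
  assumes K: "K23free V E" and S1: "S3like V E a b d1 c q1 s1" and S2: "S3like V E b c d2 a q2 s2" and n: "d2 \<noteq> a"
  shows "{d1,d2} \<notin> E"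
proof
  assume h: "{d1,d2} \<in> E"
  from S1 have V: "a \<in> V" "b \<in> V" "d1 \<in> V" "q1 \<in> V" "c \<in> V" and ds: "b \<noteq> d1" "a \<noteq> q1"
    and e: "{a,b} \<in> E" "{a,d1} \<in> E" "{q1,b} \<in> E" "{q1,d1} \<in> E" "{c,q1} \<notin> E"
    unfolding S3like_def by (auto simp: insert_commute)
  from S2 have V2: "d2 \<in> V" and e2: "{b,d2} \<in> E" "{c,d2} \<in> E"
    unfolding S3like_def by auto
  have "q1 \<noteq> d2" using e(5) e2(2) by (auto simp: insert_commute)
  moreover have "{b,a} \<in> E" "{b,q1} \<in> E" "{d2,d1} \<in> E" using e h by (auto simp: insert_commute)
  ultimately show False
    using K23D[OF K V(2,3,1,4) V2 ds(1,2) n[symmetric]] e(2,4) e2(1) by blast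
qed

lemma comb_main:
  assumes K: "K23free V E"
    and S1: "S3like V E a b d1 p1 q1 s1" and S2: "S3like V E b c d2 p2 q2 s2" and S3: "S3like V E c a d3 p3 q3 s3"
  shows "\<exists>a' b' c' p q s. S3like V E a' b' c' p q s \<and> {a',b',c'} = {a,b,c}"
proof (cases "d1 = c \<or> d2 = a \<or> d3 = b")
  case True
  then show ?thesis
  proof (elim disjE)
    assume "d1 = c" then show ?thesis using S1 by blast
  next
    assume "d2 = a" then show ?thesis using S2 by (metis insert_commute)
  next
    assume "d3 = b" then show ?thesis using S3 by (metis insert_commute)
  qed
next
  case False
  have cV: "a \<in> V" "b \<in> V" "c \<in> V" using S1 S2 unfolding S3like_def by auto
  have ac: "{a,c} \<in> E" "{b,c} \<in> E" "{a,b} \<in> E" "{c,a} \<in> E" "{c,b} \<in> E" "{b,a} \<in> E"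
    using S1 S2 S3 unfolding S3like_def by (auto simp: insert_commute)
  have p1: "p1 = c" using ear_is_c[OF K S1 cV(3) ac(1,2)] False by auto
  have p2: "p2 = a" using ear_is_c[OF K S2 cV(1) ac(6,4)] False by auto
  have p3: "p3 = b" using ear_is_c[OF K S3 cV(2) ac(5,3)] False by auto
  note T1 = S1[unfolded p1] and T2 = S2[unfolded p2] and T3 = S3[unfolded p3]
  have n12: "{d1,d2} \<notin> E" using ctr_nonadj[OF K T1 T2] False by auto
  have n23: "{d2,d3} \<notin> E" using ctr_nonadj[OF K T2 T3] False by auto
  have n31: "{d3,d1} \<notin> E" using ctr_nonadj[OF K T3 T1] False by auto
  have "S3like V E a b c d1 d2 d3"
  proof -
    from T1 have A: "a \<in> V" "b \<in> V" "d1 \<in> V" "c \<in> V" "distinct [a,b,d1,c]" "{a,d1} \<in> E" "{b,d1} \<in> E" "{c,d1} \<notin> E"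
      unfolding S3like_def by auto
    from T2 have B: "d2 \<in> V" "distinct [b,c,d2,a]" "{b,d2} \<in> E" "{c,d2} \<in> E" "{a,d2} \<notin> E"
      unfolding S3like_def by auto
    from T3 have C: "d3 \<in> V" "distinct [c,a,d3,b]" "{c,d3} \<in> E" "{a,d3} \<in> E" "{b,d3} \<notin> E"
      unfolding S3like_def by auto
    have "d1 \<noteq> d2" using A(8) B(4) by auto
    moreover have "d2 \<noteq> d3" using B(5) C(4) by auto
    moreover have "d1 \<noteq> d3" using A(8) C(3) by auto
    moreover have "d1 \<noteq> c" "d2 \<noteq> a" "d3 \<noteq> b" using False by auto
    ultimately show ?thesis unfolding S3like_def using A B C ac n12 n23 n31
      by (simp add: insert_commute)
  qed
  then show ?thesis by blast
qed


definition Hs :: "int \<Rightarrow> int \<Rightarrow> int \<Rightarrow> gpoint set set" where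
  "Hs r x1 x2 = {{(x,r),(x+1,r)} | x. x1 \<le> x \<and> x < x2}"
definition Vs :: "int \<Rightarrow> int \<Rightarrow> int \<Rightarrow> gpoint set set" where
  "Vs c y1 y2 = {{(c,y),(c,y+1)} | y. y1 \<le> y \<and> y < y2}"

definition mv :: "gpoint \<Rightarrow> int \<times> int \<Rightarrow> nat \<Rightarrow> gpoint" where
  "mv P d t = (fst P + int t * fst d, snd P + int t * snd d)"
definition seg_edges :: "gpoint \<Rightarrow> int \<times> int \<Rightarrow> nat \<Rightarrow> gpoint set set" where
  "seg_edges P d L = {{mv P d t, mv P d (Suc t)} | t. t < L}"

lemma seg_H:
  assumes "d = (1,0) \<or> d = (-1,0)"
  shows "\<exists>x1 x2. seg_edges P d L = Hs (snd P) x1 x2 \<and> x1 \<le> x2 \<and> (fst P = x1 \<or> fst P = x2)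
      \<and> (fst (mv P d L) = x1 \<or> fst (mv P d L) = x2) \<and> snd (mv P d L) = snd P"
  using assms
proof
  assume d: "d = (1,0)"
  obtain X Y where P: "P = (X,Y)" by fastforce
  have "seg_edges P d L = Hs Y X (X + int L)"
  proof
    show "seg_edges P d L \<subseteq> Hs Y X (X + int L)"
      unfolding seg_edges_def Hs_def mv_def P d by force
    show "Hs Y X (X + int L) \<subseteq> seg_edges P d L"
    proof
      fix e assume "e \<in> Hs Y X (X + int L)"
      then obtain x where x: "e = {(x,Y),(x+1,Y)}" "X \<le> x" "x < X + int L" unfolding Hs_def by blast
      define t where "t = nat (x - X)"
      have "t < L" "x = X + int t" using x unfolding t_def by auto
      then show "e \<in> seg_edges P d L" unfolding seg_edges_def mv_def P d using x(1)
        by (auto intro!: exI[of _ t] simp: algebra_simps)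
    qed
  qed
  then show ?thesis using P d apply - apply (rule exI[of _ X], rule exI[of _ "X + int L"]) by (auto simp: mv_def)
next
  assume d: "d = (-1,0)"
  obtain X Y where P: "P = (X,Y)" by fastforce
  have "seg_edges P d L = Hs Y (X - int L) X"
  proof
    show "seg_edges P d L \<subseteq> Hs Y (X - int L) X"
    proof
      fix e assume "e \<in> seg_edges P d L"
      then obtain t where t: "t < L" "e = {(X - int t, Y), (X - int t - 1, Y)}"
        unfolding seg_edges_def mv_def P d by (auto simp: algebra_simps)
      then have "e = {(X - int t - 1, Y), (X - int t - 1 + 1, Y)}" by (auto simp: insert_commute)
      then show "e \<in> Hs Y (X - int L) X" unfolding Hs_def using t(1) by force
    qed
    show "Hs Y (X - int L) X \<subseteq> seg_edges P d L"
    proof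
      fix e assume "e \<in> Hs Y (X - int L) X"
      then obtain x where x: "e = {(x,Y),(x+1,Y)}" "X - int L \<le> x" "x < X" unfolding Hs_def by blast
      define t where "t = nat (X - x - 1)"
      have "t < L" "x = X - int t - 1" using x unfolding t_def by auto
      then show "e \<in> seg_edges P d L" unfolding seg_edges_def mv_def P d using x(1)
        by (auto intro!: exI[of _ t] simp: algebra_simps insert_commute)
    qed
  qed
  then show ?thesis using P d apply - apply (rule exI[of _ "X - int L"], rule exI[of _ X]) by (auto simp: mv_def)
qed

lemma seg_V:
  assumes "d = (0,1) \<or> d = (0,-1)"
  shows "\<exists>y1 y2. seg_edges P d L = Vs (fst P) y1 y2 \<and> y1 \<le> y2 \<and> (snd P = y1 \<or> snd P = y2)
      \<and> (snd (mv P d L) = y1 \<or> snd (mv P d L) = y2) \<and> fst (mv P d L) = fst P"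
  using assms
proof
  assume d: "d = (0,1)"
  obtain X Y where P: "P = (X,Y)" by fastforce
  have "seg_edges P d L = Vs X Y (Y + int L)"
  proof
    show "seg_edges P d L \<subseteq> Vs X Y (Y + int L)"
      unfolding seg_edges_def Vs_def mv_def P d by force
    show "Vs X Y (Y + int L) \<subseteq> seg_edges P d L"
    proof
      fix e assume "e \<in> Vs X Y (Y + int L)"
      then obtain y where y: "e = {(X,y),(X,y+1)}" "Y \<le> y" "y < Y + int L" unfolding Vs_def by blast
      define t where "t = nat (y - Y)"
      have "t < L" "y = Y + int t" using y unfolding t_def by auto
      then show "e \<in> seg_edges P d L" unfolding seg_edges_def mv_def P d using y(1)
        by (auto intro!: exI[of _ t] simp: algebra_simps)
    qed
  qed
  then show ?thesis using P d apply - apply (rule exI[of _ Y], rule exI[of _ "Y + int L"]) by (auto simp: mv_def)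
next
  assume d: "d = (0,-1)"
  obtain X Y where P: "P = (X,Y)" by fastforce
  have "seg_edges P d L = Vs X (Y - int L) Y"
  proof
    show "seg_edges P d L \<subseteq> Vs X (Y - int L) Y"
    proof
      fix e assume "e \<in> seg_edges P d L"
      then obtain t where t: "t < L" "e = {(X, Y - int t), (X, Y - int t - 1)}"
        unfolding seg_edges_def mv_def P d by (auto simp: algebra_simps)
      then have "e = {(X, Y - int t - 1), (X, Y - int t - 1 + 1)}" by (auto simp: insert_commute)
      then show "e \<in> Vs X (Y - int L) Y" unfolding Vs_def using t(1) by force
    qed
    show "Vs X (Y - int L) Y \<subseteq> seg_edges P d L"
    proof
      fix e assume "e \<in> Vs X (Y - int L) Y"
      then obtain y where y: "e = {(X,y),(X,y+1)}" "Y - int L \<le> y" "y < Y" unfolding Vs_def by blast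
      define t where "t = nat (Y - y - 1)"
      have "t < L" "y = Y - int t - 1" using y unfolding t_def by auto
      then show "e \<in> seg_edges P d L" unfolding seg_edges_def mv_def P d using y(1)
        by (auto intro!: exI[of _ t] simp: algebra_simps insert_commute)
    qed
  qed
  then show ?thesis using P d apply - apply (rule exI[of _ "Y - int L"], rule exI[of _ Y]) by (auto simp: mv_def)
qed


definition hz :: "gpoint list \<Rightarrow> nat \<Rightarrow> bool" where
  "hz ps i \<longleftrightarrow> snd (ps ! i) = snd (ps ! Suc i)"
definition dl :: "gpoint list \<Rightarrow> nat \<Rightarrow> int \<times> int" where
  "dl ps i = (fst (ps ! Suc i) - fst (ps ! i), snd (ps ! Suc i) - snd (ps ! i))"

lemma dl_unit:
  assumes "grid_path ps" "Suc i < length ps"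
  shows "(hz ps i \<and> (dl ps i = (1,0) \<or> dl ps i = (-1,0))) \<or> (\<not> hz ps i \<and> (dl ps i = (0,1) \<or> dl ps i = (0,-1)))"
proof -
  have "grid_adj (ps ! i) (ps ! Suc i)" using assms unfolding grid_path_def by blast
  then show ?thesis unfolding grid_adj_def hz_def dl_def by (auto simp: abs_if split: if_splits)
qed

lemma next_pt: "ps ! Suc i = (fst (ps ! i) + fst (dl ps i), snd (ps ! i) + snd (dl ps i))"
  unfolding dl_def by simp

lemma dl_same:
  assumes gp: "grid_path ps" and l: "Suc (Suc i) < length ps" and h: "hz ps i = hz ps (Suc i)"
  shows "dl ps (Suc i) = dl ps i"
proof (rule ccontr)
  assume ne: "dl ps (Suc i) \<noteq> dl ps i"
  have "dl ps (Suc i) = (- fst (dl ps i), - snd (dl ps i))"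
    using dl_unit[OF gp, of i] dl_unit[OF gp, of "Suc i"] l h ne by auto
  then have "ps ! Suc (Suc i) = ps ! i" using next_pt[of ps "Suc i"] next_pt[of ps i]
    by (simp add: prod_eq_iff)
  moreover have "distinct ps" using gp grid_path_def by blast
  ultimately show False using l nth_eq_iff_index_eq[of ps "Suc (Suc i)" i] by simp
qed

lemma run_dl:
  assumes gp: "grid_path ps" and "Suc j < length ps" "m \<le> j"
    and nb: "\<forall>i. m \<le> i \<longrightarrow> i < j \<longrightarrow> hz ps i = hz ps (Suc i)"
  shows "dl ps j = dl ps m"
  using assms(2-4)
proof (induction j)
  case 0 then show ?case by simp
next
  case (Suc j)
  show ?case
  proof (cases "m = Suc j")
    case True then show ?thesis by simp
  next
    case False
    then have "m \<le> j" using Suc.prems by simp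
    have "dl ps (Suc j) = dl ps j" using dl_same[OF gp, of j] Suc.prems \<open>m \<le> j\<close> by simp
    also have "\<dots> = dl ps m" using Suc.IH Suc.prems \<open>m \<le> j\<close> by simp
    finally show ?thesis .
  qed
qed

lemma run_pos:
  assumes gp: "grid_path ps" and "Suc j < length ps" "m \<le> j"
    and nb: "\<forall>i. m \<le> i \<longrightarrow> i < j \<longrightarrow> hz ps i = hz ps (Suc i)"
  shows "t \<le> Suc j - m \<Longrightarrow> ps ! (m + t) = mv (ps ! m) (dl ps m) t"
proof (induction t)
  case 0 then show ?case by (simp add: mv_def)
next
  case (Suc t)
  have "m + t \<le> j" using Suc.prems by simp
  have "dl ps (m + t) = dl ps m"
    using run_dl[OF gp, of "m + t" m] assms(2) nb \<open>m + t \<le> j\<close> by auto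
  then show ?case using next_pt[of ps "m + t"] Suc.IH Suc.prems
    by (simp add: mv_def algebra_simps)
qed

lemma run_edges:
  assumes gp: "grid_path ps" and "Suc j < length ps" "m \<le> j"
    and nb: "\<forall>i. m \<le> i \<longrightarrow> i < j \<longrightarrow> hz ps i = hz ps (Suc i)"
  shows "{{ps ! i, ps ! Suc i} | i. m \<le> i \<and> i \<le> j} = seg_edges (ps ! m) (dl ps m) (Suc j - m)"
proof -
  have pos: "\<And>t. t \<le> Suc j - m \<Longrightarrow> ps ! (m + t) = mv (ps ! m) (dl ps m) t"
    using run_pos[OF assms] by blast
  show ?thesis
  proof
    show "{{ps ! i, ps ! Suc i} | i. m \<le> i \<and> i \<le> j} \<subseteq> seg_edges (ps ! m) (dl ps m) (Suc j - m)"
    proof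
      fix e assume "e \<in> {{ps ! i, ps ! Suc i} | i. m \<le> i \<and> i \<le> j}"
      then obtain i where i: "e = {ps ! i, ps ! Suc i}" "m \<le> i" "i \<le> j" by blast
      define t where "t = i - m"
      have "i = m + t" "Suc i = m + Suc t" "t < Suc j - m" using i unfolding t_def by auto
      then show "e \<in> seg_edges (ps ! m) (dl ps m) (Suc j - m)"
        unfolding seg_edges_def using i(1) pos[of t] pos[of "Suc t"] by auto
    qed
    show "seg_edges (ps ! m) (dl ps m) (Suc j - m) \<subseteq> {{ps ! i, ps ! Suc i} | i. m \<le> i \<and> i \<le> j}"
    proof
      fix e assume "e \<in> seg_edges (ps ! m) (dl ps m) (Suc j - m)"
      then obtain t where t: "e = {mv (ps ! m) (dl ps m) t, mv (ps ! m) (dl ps m) (Suc t)}" "t < Suc j - m"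
        unfolding seg_edges_def by blast
      then have "e = {ps ! (m + t), ps ! Suc (m + t)}" using pos[of t] pos[of "Suc t"] by auto
      then show "e \<in> {{ps ! i, ps ! Suc i} | i. m \<le> i \<and> i \<le> j}" using t(2) by force
    qed
  qed
qed


type_synonym prm = "int \<times> int \<times> int \<times> int \<times> int \<times> int"

fun okp :: "prm \<Rightarrow> bool" where
  "okp (r, x1, x2, c, y1, y2) \<longleftrightarrow> x1 \<le> x2 \<and> y1 \<le> y2 \<and> (x1 < x2 \<and> y1 < y2 \<longrightarrow> (c = x1 \<or> c = x2) \<and> (r = y1 \<or> r = y2))"

fun pe :: "prm \<Rightarrow> gpoint set set" where
  "pe (r, x1, x2, c, y1, y2) = Hs r x1 x2 \<union> Vs c y1 y2"

lemma hz_dl: "grid_path ps \<Longrightarrow> Suc i < length ps \<Longrightarrow> hz ps i \<longleftrightarrow> snd (dl ps i) = 0"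
  using dl_unit[of ps i] by auto

lemma bend_iff:
  "i \<in> bend_points ps \<longleftrightarrow> 0 < i \<and> Suc i < length ps \<and> hz ps (i - 1) \<noteq> hz ps i"
  unfolding bend_points_def hz_def by (cases i) auto

lemma Hs_empty: "Hs r x x = {}" unfolding Hs_def by auto
lemma Vs_empty: "Vs c y y = {}" unfolding Vs_def by auto

lemma path_params:
  assumes gp: "grid_path ps" and b: "bends ps \<le> 1"
  shows "\<exists>p. okp p \<and> path_edges ps = pe p"
proof -
  define n where "n = length ps"
  have n1: "n \<ge> 1" using gp unfolding grid_path_def n_def by (cases ps) auto
  have PE: "path_edges ps = {{ps ! i, ps ! Suc i} | i. Suc i < n}" unfolding path_edges_def n_def by simp
  show ?thesis
  proof (cases "n = 1")
    case True
    then have "path_edges ps = {}" using PE by simp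
    then show ?thesis by (intro exI[of _ "(0,0,0,0,0,0)"]) (simp add: Hs_empty Vs_empty)
  next
    case False
    then have n2: "n \<ge> 2" using n1 by simp
    have fin: "finite (bend_points ps)" unfolding bend_points_def by (rule finite_subset[of _ "{..<length ps}"]) auto
    have onb: "\<forall>a\<in>bend_points ps. \<forall>b\<in>bend_points ps. a = b"
      using b fin card_le_Suc0_iff_eq[of "bend_points ps"] unfolding bends_def by simp
    have param_run: "\<exists>p. okp p \<and> seg_edges P d L = pe p" if "d = (1,0) \<or> d = (-1,0) \<or> d = (0,1) \<or> d = (0,-1)" for P d L
    proof -
      from that consider "d = (1,0) \<or> d = (-1,0)" | "d = (0,1) \<or> d = (0,-1)" by blast
      then show ?thesis
      proof cases
        case 1
        then obtain x1 x2 where "seg_edges P d L = Hs (snd P) x1 x2" "x1 \<le> x2" using seg_H by blast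
        then show ?thesis by (intro exI[of _ "(snd P, x1, x2, 0, 0, 0)"]) (simp add: Vs_empty)
      next
        case 2
        then obtain y1 y2 where "seg_edges P d L = Vs (fst P) y1 y2" "y1 \<le> y2" using seg_V by blast
        then show ?thesis by (intro exI[of _ "(0, 0, 0, fst P, y1, y2)"]) (simp add: Hs_empty)
      qed
    qed
    show ?thesis
    proof (cases "bend_points ps = {}")
      case True
      have nb: "\<forall>i. 0 \<le> i \<longrightarrow> i < n - 2 \<longrightarrow> hz ps i = hz ps (Suc i)"
      proof (intro allI impI)
        fix i assume "0 \<le> i" "i < n - 2"
        then have "Suc i \<notin> bend_points ps" using True by simp
        then show "hz ps i = hz ps (Suc i)" using bend_iff[of "Suc i" ps] \<open>i < n - 2\<close> n_def by auto
      qed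
      have "path_edges ps = {{ps ! i, ps ! Suc i} | i. 0 \<le> i \<and> i \<le> n - 2}"
        unfolding PE using n2 by (metis (no_types, lifting) Suc_1 Suc_diff_Suc Suc_le_eq Suc_lessD diff_Suc_1 le0 less_Suc_eq_le)
      also have "\<dots> = seg_edges (ps ! 0) (dl ps 0) (Suc (n - 2) - 0)"
        using run_edges[OF gp, of "n - 2" 0] nb n2 n_def by simp
      finally have PE1: "path_edges ps = seg_edges (ps ! 0) (dl ps 0) (Suc (n - 2) - 0)" .
      have "dl ps 0 = (1,0) \<or> dl ps 0 = (-1,0) \<or> dl ps 0 = (0,1) \<or> dl ps 0 = (0,-1)"
        using dl_unit[OF gp, of 0] n2 n_def by auto
      then obtain p where "okp p" "seg_edges (ps ! 0) (dl ps 0) (Suc (n - 2) - 0) = pe p"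
        using param_run by blast
      then show ?thesis using PE1 by metis
    next
      case False
      then obtain k where k: "k \<in> bend_points ps" by blast
      then have kb: "0 < k" "Suc k < n" "hz ps (k - 1) \<noteq> hz ps k" using bend_iff n_def by auto
      have only: "i \<in> bend_points ps \<Longrightarrow> i = k" for i using onb k by blast
      have nb1: "\<forall>i. 0 \<le> i \<longrightarrow> i < k - 1 \<longrightarrow> hz ps i = hz ps (Suc i)"
      proof (intro allI impI)
        fix i assume "0 \<le> i" "i < k - 1"
        then have "Suc i \<notin> bend_points ps" using only by force
        then show "hz ps i = hz ps (Suc i)" using bend_iff[of "Suc i" ps] \<open>i < k - 1\<close> kb n_def by auto
      qed
      have nb2: "\<forall>i. k \<le> i \<longrightarrow> i < n - 2 \<longrightarrow> hz ps i = hz ps (Suc i)"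
      proof (intro allI impI)
        fix i assume "k \<le> i" "i < n - 2"
        then have "Suc i \<notin> bend_points ps" using only by force
        then show "hz ps i = hz ps (Suc i)" using bend_iff[of "Suc i" ps] \<open>i < n - 2\<close> n_def by auto
      qed
      have E1: "{{ps ! i, ps ! Suc i} | i. 0 \<le> i \<and> i \<le> k - 1} = seg_edges (ps ! 0) (dl ps 0) k"
        using run_edges[OF gp, of "k - 1" 0] nb1 kb n_def by simp
      have E2: "{{ps ! i, ps ! Suc i} | i. k \<le> i \<and> i \<le> n - 2} = seg_edges (ps ! k) (dl ps k) (n - 1 - k)"
        using run_edges[OF gp, of "n - 2" k] nb2 kb n_def by (simp add: Suc_diff_Suc)
      have "path_edges ps = {{ps ! i, ps ! Suc i} | i. 0 \<le> i \<and> i \<le> k - 1} \<union> {{ps ! i, ps ! Suc i} | i. k \<le> i \<and> i \<le> n - 2}"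
      proof -
        have IM: "\<And>P. {{ps ! i, ps ! Suc i} | i. P i} = (\<lambda>i. {ps ! i, ps ! Suc i}) ` {i. P i}" by blast
        have "{i. Suc i < n} = {i. 0 \<le> i \<and> i \<le> k - 1} \<union> {i. k \<le> i \<and> i \<le> n - 2}" using kb by auto
        then show ?thesis unfolding PE IM by (simp only: image_Un)
      qed
      then have PE2: "path_edges ps = seg_edges (ps ! 0) (dl ps 0) k \<union> seg_edges (ps ! k) (dl ps k) (n - 1 - k)"
        using E1 E2 by simp
      have pk: "ps ! k = mv (ps ! 0) (dl ps 0) k"
        using run_pos[OF gp, of "k - 1" 0 k] nb1 kb n_def by simp
      have d0: "dl ps (k - 1) = dl ps 0" using run_dl[OF gp, of "k - 1" 0] nb1 kb n_def by simp
      have h0: "hz ps 0 \<noteq> hz ps k"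
        using kb hz_dl[OF gp, of "k - 1"] hz_dl[OF gp, of 0] d0 n_def by auto
      have u0: "(hz ps 0 \<and> (dl ps 0 = (1,0) \<or> dl ps 0 = (-1,0))) \<or> (\<not> hz ps 0 \<and> (dl ps 0 = (0,1) \<or> dl ps 0 = (0,-1)))"
        using dl_unit[OF gp, of 0] kb n_def by simp
      have uk: "(hz ps k \<and> (dl ps k = (1,0) \<or> dl ps k = (-1,0))) \<or> (\<not> hz ps k \<and> (dl ps k = (0,1) \<or> dl ps k = (0,-1)))"
        using dl_unit[OF gp, of k] kb n_def by simp
      show ?thesis
      proof (cases "hz ps 0")
        case True
        then have dh: "dl ps 0 = (1,0) \<or> dl ps 0 = (-1,0)" and dv: "dl ps k = (0,1) \<or> dl ps k = (0,-1)"
          using u0 uk h0 by auto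
        obtain x1 x2 where X: "seg_edges (ps ! 0) (dl ps 0) k = Hs (snd (ps ! 0)) x1 x2" "x1 \<le> x2"
          "fst (ps ! k) = x1 \<or> fst (ps ! k) = x2" "snd (ps ! k) = snd (ps ! 0)"
          using seg_H[OF dh, of "ps ! 0" k] pk by auto
        obtain y1 y2 where Y: "seg_edges (ps ! k) (dl ps k) (n - 1 - k) = Vs (fst (ps ! k)) y1 y2" "y1 \<le> y2"
          "snd (ps ! k) = y1 \<or> snd (ps ! k) = y2"
          using seg_V[OF dv, of "ps ! k" "n - 1 - k"] by auto
        show ?thesis
          by (rule exI[of _ "(snd (ps ! 0), x1, x2, fst (ps ! k), y1, y2)"]) (use PE2 X Y in auto)
      next
        case False
        then have dv: "dl ps 0 = (0,1) \<or> dl ps 0 = (0,-1)" and dh: "dl ps k = (1,0) \<or> dl ps k = (-1,0)"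
          using u0 uk h0 by auto
        obtain y1 y2 where Y: "seg_edges (ps ! 0) (dl ps 0) k = Vs (fst (ps ! 0)) y1 y2" "y1 \<le> y2"
          "snd (ps ! k) = y1 \<or> snd (ps ! k) = y2" "fst (ps ! k) = fst (ps ! 0)"
          using seg_V[OF dv, of "ps ! 0" k] pk by auto
        obtain x1 x2 where X: "seg_edges (ps ! k) (dl ps k) (n - 1 - k) = Hs (snd (ps ! k)) x1 x2" "x1 \<le> x2"
          "fst (ps ! k) = x1 \<or> fst (ps ! k) = x2"
          using seg_H[OF dh, of "ps ! k" "n - 1 - k"] by auto
        show ?thesis
          by (rule exI[of _ "(snd (ps ! k), x1, x2, fst (ps ! 0), y1, y2)"]) (use PE2 X Y in auto)
      qed
    qed
  qed
qed


fun shp :: "prm \<Rightarrow> prm \<Rightarrow> bool" where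
  "shp (r, x1, x2, c, y1, y2) (r', x1', x2', c', y1', y2') \<longleftrightarrow>
    (r = r' \<and> x1 < x2 \<and> x1 < x2' \<and> x1' < x2 \<and> x1' < x2') \<or>
    (c = c' \<and> y1 < y2 \<and> y1 < y2' \<and> y1' < y2 \<and> y1' < y2')"

fun hH :: "prm \<Rightarrow> int \<Rightarrow> int \<Rightarrow> bool" where
  "hH (r, x1, x2, c, y1, y2) x y \<longleftrightarrow> y = r \<and> x1 \<le> x \<and> x < x2"
fun hV :: "prm \<Rightarrow> int \<Rightarrow> int \<Rightarrow> bool" where
  "hV (r, x1, x2, c, y1, y2) x y \<longleftrightarrow> x = c \<and> y1 \<le> y \<and> y < y2"

definition two3 :: "bool \<Rightarrow> bool \<Rightarrow> bool \<Rightarrow> bool" where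
  "two3 A B C \<longleftrightarrow> (A \<and> B \<and> \<not> C) \<or> (A \<and> \<not> B \<and> C) \<or> (\<not> A \<and> B \<and> C)"

definition claw3 :: "prm \<Rightarrow> int \<Rightarrow> int \<Rightarrow> nat \<Rightarrow> bool" where
  "claw3 p X Y d \<longleftrightarrow>
    (if d = 0 then two3 (hH p (X - 1) Y) (hV p X Y) (hV p X (Y - 1))
     else if d = 1 then two3 (hH p X Y) (hV p X Y) (hV p X (Y - 1))
     else if d = 2 then two3 (hH p X Y) (hH p (X - 1) Y) (hV p X (Y - 1))
     else two3 (hH p X Y) (hH p (X - 1) Y) (hV p X Y))"

lemma claw3_simps:
  "claw3 p X Y 0 = two3 (hH p (X - 1) Y) (hV p X Y) (hV p X (Y - 1))"
  "claw3 p X Y 1 = two3 (hH p X Y) (hV p X Y) (hV p X (Y - 1))"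
  "claw3 p X Y 2 = two3 (hH p X Y) (hH p (X - 1) Y) (hV p X (Y - 1))"
  "claw3 p X Y 3 = two3 (hH p X Y) (hH p (X - 1) Y) (hV p X Y)"
  by (simp_all add: claw3_def)

fun cH :: "prm \<Rightarrow> prm \<Rightarrow> prm \<Rightarrow> bool" where
  "cH (ra, xa1, xa2, ca, ya1, ya2) (rb, xb1, xb2, cb, yb1, yb2) (rc, xc1, xc2, cc, yc1, yc2) \<longleftrightarrow>
    ra = rb \<and> rb = rc \<and> xa1 < xb2 \<and> xa1 < xc2 \<and> xb1 < xa2 \<and> xb1 < xc2 \<and> xc1 < xa2 \<and> xc1 < xb2 \<and> xa1 < xa2 \<and> xb1 < xb2 \<and> xc1 < xc2"
fun cV :: "prm \<Rightarrow> prm \<Rightarrow> prm \<Rightarrow> bool" where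
  "cV (ra, xa1, xa2, ca, ya1, ya2) (rb, xb1, xb2, cb, yb1, yb2) (rc, xc1, xc2, cc, yc1, yc2) \<longleftrightarrow>
    ca = cb \<and> cb = cc \<and> ya1 < yb2 \<and> ya1 < yc2 \<and> yb1 < ya2 \<and> yb1 < yc2 \<and> yc1 < ya2 \<and> yc1 < yb2 \<and> ya1 < ya2 \<and> yb1 < yb2 \<and> yc1 < yc2"

declare [[smt_timeout = 300]]

lemma keyA_explicit:
  assumes "okp (ra, xa1, xa2, ca, ya1, ya2)" "okp (rb, xb1, xb2, cb, yb1, yb2)" "okp (rc, xc1, xc2, cc, yc1, yc2)"
    "shp (ra, xa1, xa2, ca, ya1, ya2) (rb, xb1, xb2, cb, yb1, yb2)" "shp (rb, xb1, xb2, cb, yb1, yb2) (rc, xc1, xc2, cc, yc1, yc2)" "shp (ra, xa1, xa2, ca, ya1, ya2) (rc, xc1, xc2, cc, yc1, yc2)"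
  shows "cH (ra, xa1, xa2, ca, ya1, ya2) (rb, xb1, xb2, cb, yb1, yb2) (rc, xc1, xc2, cc, yc1, yc2) \<or>
   cV (ra, xa1, xa2, ca, ya1, ya2) (rb, xb1, xb2, cb, yb1, yb2) (rc, xc1, xc2, cc, yc1, yc2) \<or>
   (claw3 (ra, xa1, xa2, ca, ya1, ya2) ca ra 0 \<and> claw3 (rb, xb1, xb2, cb, yb1, yb2) ca ra 0 \<and> claw3 (rc, xc1, xc2, cc, yc1, yc2) ca ra 0) \<or>
   (claw3 (ra, xa1, xa2, ca, ya1, ya2) ca ra 1 \<and> claw3 (rb, xb1, xb2, cb, yb1, yb2) ca ra 1 \<and> claw3 (rc, xc1, xc2, cc, yc1, yc2) ca ra 1) \<or>
   (claw3 (ra, xa1, xa2, ca, ya1, ya2) ca ra 2 \<and> claw3 (rb, xb1, xb2, cb, yb1, yb2) ca ra 2 \<and> claw3 (rc, xc1, xc2, cc, yc1, yc2) ca ra 2) \<or>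
   (claw3 (ra, xa1, xa2, ca, ya1, ya2) ca ra 3 \<and> claw3 (rb, xb1, xb2, cb, yb1, yb2) ca ra 3 \<and> claw3 (rc, xc1, xc2, cc, yc1, yc2) ca ra 3) \<or>
   (claw3 (ra, xa1, xa2, ca, ya1, ya2) cb rb 0 \<and> claw3 (rb, xb1, xb2, cb, yb1, yb2) cb rb 0 \<and> claw3 (rc, xc1, xc2, cc, yc1, yc2) cb rb 0) \<or>
   (claw3 (ra, xa1, xa2, ca, ya1, ya2) cb rb 1 \<and> claw3 (rb, xb1, xb2, cb, yb1, yb2) cb rb 1 \<and> claw3 (rc, xc1, xc2, cc, yc1, yc2) cb rb 1) \<or>
   (claw3 (ra, xa1, xa2, ca, ya1, ya2) cb rb 2 \<and> claw3 (rb, xb1, xb2, cb, yb1, yb2) cb rb 2 \<and> claw3 (rc, xc1, xc2, cc, yc1, yc2) cb rb 2) \<or>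
   (claw3 (ra, xa1, xa2, ca, ya1, ya2) cb rb 3 \<and> claw3 (rb, xb1, xb2, cb, yb1, yb2) cb rb 3 \<and> claw3 (rc, xc1, xc2, cc, yc1, yc2) cb rb 3) \<or>
   (claw3 (ra, xa1, xa2, ca, ya1, ya2) cc rc 0 \<and> claw3 (rb, xb1, xb2, cb, yb1, yb2) cc rc 0 \<and> claw3 (rc, xc1, xc2, cc, yc1, yc2) cc rc 0) \<or>
   (claw3 (ra, xa1, xa2, ca, ya1, ya2) cc rc 1 \<and> claw3 (rb, xb1, xb2, cb, yb1, yb2) cc rc 1 \<and> claw3 (rc, xc1, xc2, cc, yc1, yc2) cc rc 1) \<or>
   (claw3 (ra, xa1, xa2, ca, ya1, ya2) cc rc 2 \<and> claw3 (rb, xb1, xb2, cb, yb1, yb2) cc rc 2 \<and> claw3 (rc, xc1, xc2, cc, yc1, yc2) cc rc 2) \<or>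
   (claw3 (ra, xa1, xa2, ca, ya1, ya2) cc rc 3 \<and> claw3 (rb, xb1, xb2, cb, yb1, yb2) cc rc 3 \<and> claw3 (rc, xc1, xc2, cc, yc1, yc2) cc rc 3)"
  using assms unfolding claw3_simps okp.simps shp.simps hH.simps hV.simps two3_def cH.simps cV.simps by (smt (z3))

lemma keyA:
  assumes "okp pa" "okp pb" "okp pc" "shp pa pb" "shp pb pc" "shp pa pc"
  shows "cH pa pb pc \<or> cV pa pb pc \<or> (\<exists>X Y d. claw3 pa X Y d \<and> claw3 pb X Y d \<and> claw3 pc X Y d)"
proof -
  obtain ra xa1 xa2 ca ya1 ya2 where a: "pa = (ra, xa1, xa2, ca, ya1, ya2)" by (cases pa) auto
  obtain rb xb1 xb2 cb yb1 yb2 where b: "pb = (rb, xb1, xb2, cb, yb1, yb2)" by (cases pb) auto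
  obtain rc xc1 xc2 cc yc1 yc2 where c: "pc = (rc, xc1, xc2, cc, yc1, yc2)" by (cases pc) auto
  show ?thesis using keyA_explicit[of ra xa1 xa2 ca ya1 ya2 rb xb1 xb2 cb yb1 yb2 rc xc1 xc2 cc yc1 yc2] assms
    unfolding a b c by blast
qed

lemma keyB_explicit:
  assumes "okp (ra, xa1, xa2, ca, ya1, ya2)" "okp (rb, xb1, xb2, cb, yb1, yb2)" "okp (rc, xc1, xc2, cc, yc1, yc2)" "okp (rp, xp1, xp2, cp, yp1, yp2)" "okp (rq, xq1, xq2, cq, yq1, yq2)" "okp (rs, xs1, xs2, cs, ys1, ys2)"
    "shp (rp, xp1, xp2, cp, yp1, yp2) (ra, xa1, xa2, ca, ya1, ya2)" "shp (rp, xp1, xp2, cp, yp1, yp2) (rb, xb1, xb2, cb, yb1, yb2)" "shp (rq, xq1, xq2, cq, yq1, yq2) (rb, xb1, xb2, cb, yb1, yb2)" "shp (rq, xq1, xq2, cq, yq1, yq2) (rc, xc1, xc2, cc, yc1, yc2)" "shp (rs, xs1, xs2, cs, ys1, ys2) (rc, xc1, xc2, cc, yc1, yc2)" "shp (rs, xs1, xs2, cs, ys1, ys2) (ra, xa1, xa2, ca, ya1, ya2)"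
    "\<not> shp (rp, xp1, xp2, cp, yp1, yp2) (rc, xc1, xc2, cc, yc1, yc2)" "\<not> shp (rq, xq1, xq2, cq, yq1, yq2) (ra, xa1, xa2, ca, ya1, ya2)" "\<not> shp (rs, xs1, xs2, cs, ys1, ys2) (rb, xb1, xb2, cb, yb1, yb2)" "\<not> shp (rp, xp1, xp2, cp, yp1, yp2) (rq, xq1, xq2, cq, yq1, yq2)" "\<not> shp (rq, xq1, xq2, cq, yq1, yq2) (rs, xs1, xs2, cs, ys1, ys2)" "\<not> shp (rp, xp1, xp2, cp, yp1, yp2) (rs, xs1, xs2, cs, ys1, ys2)"
    "cH (ra, xa1, xa2, ca, ya1, ya2) (rb, xb1, xb2, cb, yb1, yb2) (rc, xc1, xc2, cc, yc1, yc2)"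
  shows False
  using assms unfolding okp.simps shp.simps cH.simps by (smt (z3))

lemma keyBV_explicit:
  assumes "okp (ra, xa1, xa2, ca, ya1, ya2)" "okp (rb, xb1, xb2, cb, yb1, yb2)" "okp (rc, xc1, xc2, cc, yc1, yc2)" "okp (rp, xp1, xp2, cp, yp1, yp2)" "okp (rq, xq1, xq2, cq, yq1, yq2)" "okp (rs, xs1, xs2, cs, ys1, ys2)"
    "shp (rp, xp1, xp2, cp, yp1, yp2) (ra, xa1, xa2, ca, ya1, ya2)" "shp (rp, xp1, xp2, cp, yp1, yp2) (rb, xb1, xb2, cb, yb1, yb2)" "shp (rq, xq1, xq2, cq, yq1, yq2) (rb, xb1, xb2, cb, yb1, yb2)" "shp (rq, xq1, xq2, cq, yq1, yq2) (rc, xc1, xc2, cc, yc1, yc2)" "shp (rs, xs1, xs2, cs, ys1, ys2) (rc, xc1, xc2, cc, yc1, yc2)" "shp (rs, xs1, xs2, cs, ys1, ys2) (ra, xa1, xa2, ca, ya1, ya2)"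
    "\<not> shp (rp, xp1, xp2, cp, yp1, yp2) (rc, xc1, xc2, cc, yc1, yc2)" "\<not> shp (rq, xq1, xq2, cq, yq1, yq2) (ra, xa1, xa2, ca, ya1, ya2)" "\<not> shp (rs, xs1, xs2, cs, ys1, ys2) (rb, xb1, xb2, cb, yb1, yb2)" "\<not> shp (rp, xp1, xp2, cp, yp1, yp2) (rq, xq1, xq2, cq, yq1, yq2)" "\<not> shp (rq, xq1, xq2, cq, yq1, yq2) (rs, xs1, xs2, cs, ys1, ys2)" "\<not> shp (rp, xp1, xp2, cp, yp1, yp2) (rs, xs1, xs2, cs, ys1, ys2)"
    "cV (ra, xa1, xa2, ca, ya1, ya2) (rb, xb1, xb2, cb, yb1, yb2) (rc, xc1, xc2, cc, yc1, yc2)"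
  shows False
  using assms unfolding okp.simps shp.simps cV.simps by (smt (z3))

lemma keyB:
  assumes "okp pa" "okp pb" "okp pc" "okp pp" "okp pq" "okp ps"
    "shp pp pa" "shp pp pb" "shp pq pb" "shp pq pc" "shp ps pc" "shp ps pa"
    "\<not> shp pp pc" "\<not> shp pq pa" "\<not> shp ps pb" "\<not> shp pp pq" "\<not> shp pq ps" "\<not> shp pp ps"
  shows "\<not> cH pa pb pc \<and> \<not> cV pa pb pc"
proof -
  obtain ra xa1 xa2 ca ya1 ya2 where a: "pa = (ra, xa1, xa2, ca, ya1, ya2)" by (cases pa) auto
  obtain rb xb1 xb2 cb yb1 yb2 where b: "pb = (rb, xb1, xb2, cb, yb1, yb2)" by (cases pb) auto
  obtain rc xc1 xc2 cc yc1 yc2 where c: "pc = (rc, xc1, xc2, cc, yc1, yc2)" by (cases pc) auto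
  obtain rp xp1 xp2 cp yp1 yp2 where p: "pp = (rp, xp1, xp2, cp, yp1, yp2)" by (cases pp) auto
  obtain rq xq1 xq2 cq yq1 yq2 where q: "pq = (rq, xq1, xq2, cq, yq1, yq2)" by (cases pq) auto
  obtain rs xs1 xs2 cs ys1 ys2 where s: "ps = (rs, xs1, xs2, cs, ys1, ys2)" by (cases ps) auto
  show ?thesis
    using keyB_explicit[of ra xa1 xa2 ca ya1 ya2 rb xb1 xb2 cb yb1 yb2 rc xc1 xc2 cc yc1 yc2
        rp xp1 xp2 cp yp1 yp2 rq xq1 xq2 cq yq1 yq2 rs xs1 xs2 cs ys1 ys2]
      keyBV_explicit[of ra xa1 xa2 ca ya1 ya2 rb xb1 xb2 cb yb1 yb2 rc xc1 xc2 cc yc1 yc2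
        rp xp1 xp2 cp yp1 yp2 rq xq1 xq2 cq yq1 yq2 rs xs1 xs2 cs ys1 ys2] assms
    unfolding a b c p q s by blast
qed


lemma Hedge_eq: "{(x,r),(x+1,r)} = {(x',r'),(x'+1,r')} \<longleftrightarrow> (x::int) = x' \<and> (r::int) = r'"
  by (auto simp: doubleton_eq_iff)
lemma Vedge_eq: "{(c,y),(c,y+1)} = {(c',y'),(c',y'+1)} \<longleftrightarrow> (c::int) = c' \<and> (y::int) = y'"
  by (auto simp: doubleton_eq_iff)
lemma HVedge_ne: "{(x,r),(x+1,r)} \<noteq> {(c::int,y),(c,y+1::int)}"
  by (auto simp: doubleton_eq_iff)
lemma VHedge_ne: "{(c::int,y),(c,y+1::int)} \<noteq> {(x,r),(x+1,r)}"
  using HVedge_ne by metis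

lemma Hs_inter: "Hs r x1 x2 \<inter> Hs r' x1' x2' \<noteq> {} \<longleftrightarrow> r = r' \<and> x1 < x2 \<and> x1 < x2' \<and> x1' < x2 \<and> x1' < x2'"
proof
  assume "Hs r x1 x2 \<inter> Hs r' x1' x2' \<noteq> {}"
  then obtain x x' where "{(x,r),(x+1,r)} = {(x',r'),(x'+1,r')}" "x1 \<le> x" "x < x2" "x1' \<le> x'" "x' < x2'"
    unfolding Hs_def by blast
  then show "r = r' \<and> x1 < x2 \<and> x1 < x2' \<and> x1' < x2 \<and> x1' < x2'" unfolding Hedge_eq by auto
next
  assume h: "r = r' \<and> x1 < x2 \<and> x1 < x2' \<and> x1' < x2 \<and> x1' < x2'"
  then have "{(max x1 x1', r), (max x1 x1' + 1, r)} \<in> Hs r x1 x2 \<inter> Hs r' x1' x2'"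
    unfolding Hs_def by auto
  then show "Hs r x1 x2 \<inter> Hs r' x1' x2' \<noteq> {}" by blast
qed

lemma Vs_inter: "Vs c y1 y2 \<inter> Vs c' y1' y2' \<noteq> {} \<longleftrightarrow> c = c' \<and> y1 < y2 \<and> y1 < y2' \<and> y1' < y2 \<and> y1' < y2'"
proof
  assume "Vs c y1 y2 \<inter> Vs c' y1' y2' \<noteq> {}"
  then obtain y y' where "{(c,y),(c,y+1)} = {(c',y'),(c',y'+1)}" "y1 \<le> y" "y < y2" "y1' \<le> y'" "y' < y2'"
    unfolding Vs_def by blast
  then show "c = c' \<and> y1 < y2 \<and> y1 < y2' \<and> y1' < y2 \<and> y1' < y2'" unfolding Vedge_eq by auto
next
  assume h: "c = c' \<and> y1 < y2 \<and> y1 < y2' \<and> y1' < y2 \<and> y1' < y2'"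
  then have "{(c, max y1 y1'), (c, max y1 y1' + 1)} \<in> Vs c y1 y2 \<inter> Vs c' y1' y2'"
    unfolding Vs_def by auto
  then show "Vs c y1 y2 \<inter> Vs c' y1' y2' \<noteq> {}" by blast
qed

lemma HVs_inter: "Hs r x1 x2 \<inter> Vs c y1 y2 = {}"
  unfolding Hs_def Vs_def using HVedge_ne by blast

lemma pe_share: "pe p \<inter> pe q \<noteq> {} \<longleftrightarrow> shp p q"
proof -
  obtain r x1 x2 c y1 y2 where p: "p = (r, x1, x2, c, y1, y2)" by (cases p) auto
  obtain r' x1' x2' c' y1' y2' where q: "q = (r', x1', x2', c', y1', y2')" by (cases q) auto
  have "pe p \<inter> pe q = (Hs r x1 x2 \<inter> Hs r' x1' x2') \<union> (Vs c y1 y2 \<inter> Vs c' y1' y2') \<union>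
      (Hs r x1 x2 \<inter> Vs c' y1' y2') \<union> (Vs c y1 y2 \<inter> Hs r' x1' x2')"
    unfolding p q by auto
  also have "\<dots> = (Hs r x1 x2 \<inter> Hs r' x1' x2') \<union> (Vs c y1 y2 \<inter> Vs c' y1' y2')"
    using HVs_inter[of r x1 x2 c' y1' y2'] HVs_inter[of r' x1' x2' c y1 y2] by blast
  finally show ?thesis unfolding p q using Hs_inter Vs_inter by auto
qed

lemma memR: "{(X,Y),(X+1,Y)} \<in> pe p \<longleftrightarrow> hH p X Y"
proof -
  obtain r x1 x2 c y1 y2 where p: "p = (r, x1, x2, c, y1, y2)" by (cases p) auto
  have h1: "{(X,Y),(X+1,Y)} \<in> Hs r x1 x2 \<longleftrightarrow> Y = r \<and> x1 \<le> X \<and> X < x2" unfolding Hs_def by (auto simp: Hedge_eq)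
  have h2: "{(X,Y),(X+1,Y)} \<notin> Vs c y1 y2" unfolding Vs_def using HVedge_ne by blast
  show ?thesis by (simp add: p h1 h2)
qed
lemma memL: "{(X,Y),(X-1,Y)} \<in> pe p \<longleftrightarrow> hH p (X-1) Y"
proof -
  have e: "{(X,Y),(X-1,Y)} = {(X-1,Y),(X-1+1,Y)}" by auto
  show ?thesis unfolding e memR ..
qed
lemma memU: "{(X,Y),(X,Y+1)} \<in> pe p \<longleftrightarrow> hV p X Y"
proof -
  obtain r x1 x2 c y1 y2 where p: "p = (r, x1, x2, c, y1, y2)" by (cases p) auto
  have h1: "{(X,Y),(X,Y+1)} \<in> Vs c y1 y2 \<longleftrightarrow> X = c \<and> y1 \<le> Y \<and> Y < y2" unfolding Vs_def by (auto simp: Vedge_eq)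
  have h2: "{(X,Y),(X,Y+1)} \<notin> Hs r x1 x2" unfolding Hs_def using VHedge_ne by blast
  show ?thesis by (simp add: p h1 h2)
qed
lemma memD: "{(X,Y),(X,Y-1)} \<in> pe p \<longleftrightarrow> hV p X (Y-1)"
proof -
  have e: "{(X,Y),(X,Y-1)} = {(X,Y-1),(X,Y-1+1)}" by auto
  show ?thesis unfolding e memU ..
qed

lemma card_two3:
  assumes "distinct [e1, e2, e3]" "two3 (e1 \<in> S) (e2 \<in> S) (e3 \<in> S)"
  shows "card (S \<inter> {e1, e2, e3}) = 2"
proof -
  from assms(2) consider "S \<inter> {e1,e2,e3} = {e1,e2}" | "S \<inter> {e1,e2,e3} = {e1,e3}" | "S \<inter> {e1,e2,e3} = {e2,e3}"
    unfolding two3_def by blast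
  then show ?thesis using assms(1) by cases auto
qed

lemma claw_clique_from:
  assumes "path_edges A = pe pa" "path_edges B = pe pb" "path_edges C = pe pc"
    and "claw3 pa X Y d" "claw3 pb X Y d" "claw3 pc X Y d"
  shows "form_claw_clique {A, B, C}"
proof -
  let ?c = "(X,Y)"
  let ?R = "(X+1,Y)" and ?L = "(X-1,Y)" and ?U = "(X,Y+1)" and ?D = "(X,Y-1)"
  have adj: "grid_adj ?c ?R" "grid_adj ?c ?L" "grid_adj ?c ?U" "grid_adj ?c ?D" unfolding grid_adj_def by auto
  have dst: "distinct [{?c,?R},{?c,?L},{?c,?U},{?c,?D}]" by (auto simp: doubleton_eq_iff)
  have gen: "form_claw_clique {A, B, C}" if cl: "is_claw ?c q1 q2 q3"
    and tw: "\<And>p. p \<in> {pa,pb,pc} \<Longrightarrow> two3 ({?c,q1} \<in> pe p) ({?c,q2} \<in> pe p) ({?c,q3} \<in> pe p)"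
    and ds: "distinct [{?c,q1},{?c,q2},{?c,q3}]" for q1 q2 q3
  proof -
    have "uses_two_claw_edges Z ?c q1 q2 q3" if "Z \<in> {A,B,C}" for Z
    proof -
      obtain p where pp: "p \<in> {pa,pb,pc}" "path_edges Z = pe p" using \<open>Z \<in> {A,B,C}\<close> assms(1-3) by blast
      show ?thesis unfolding uses_two_claw_edges_def claw_edges_def pp(2)
        using card_two3[OF ds tw[OF pp(1)]] by simp
    qed
    then show ?thesis unfolding form_claw_clique_def using cl by blast
  qed
  show ?thesis
  proof (cases "d = 0 \<or> d = 1 \<or> d = 2")
    case True
    then show ?thesis
    proof (elim disjE)
      assume d: "d = 0"
      show ?thesis
        by (rule gen[of ?L ?U ?D]) (use adj dst assms(4-6) d in \<open>auto simp: is_claw_def claw3_def memL memU memD\<close>)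
    next
      assume d: "d = 1"
      show ?thesis
        by (rule gen[of ?R ?U ?D]) (use adj dst assms(4-6) d in \<open>auto simp: is_claw_def claw3_def memR memU memD\<close>)
    next
      assume d: "d = 2"
      show ?thesis
        by (rule gen[of ?R ?L ?D]) (use adj dst assms(4-6) d in \<open>auto simp: is_claw_def claw3_def memR memL memD\<close>)
    qed
  next
    case False
    show ?thesis
      by (rule gen[of ?R ?L ?U]) (use adj dst assms(4-6) False in \<open>auto simp: is_claw_def claw3_def memR memL memU\<close>)
  qed
qed


theorem corollary4p11:
  fixes V :: "'v set" and E :: "'v set set" and P :: "'v \<Rightarrow> (int \<times> int) list"
    and a b c :: 'v
  assumes "simple_graph V E"
    and "maximal_outerplanar V E"
    and "B1_EPG_rep V E P"
    and "a \<in> reduced_vertices V E" and "b \<in> reduced_vertices V E" and "c \<in> reduced_vertices V E"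
    and "distinct [a, b, c]"
    and "{a, b} \<in> reduced_edges V E" and "{b, c} \<in> reduced_edges V E" and "{a, c} \<in> reduced_edges V E"
  shows "form_claw_clique {P a, P b, P c}"
proof -
  have op: "outerplanar V E" using assms(2) maximal_outerplanar_def by blast
  have K: "K23free V E" unfolding K23free_def using K23_free[OF op] by blast
  obtain d1 p1 q1 s1 where S1: "S3like V E a b d1 p1 q1 s1" using redge_S3like[OF assms(8)] by blast
  obtain d2 p2 q2 s2 where S2: "S3like V E b c d2 p2 q2 s2" using redge_S3like[OF assms(9)] by blast
  have ca: "{c, a} \<in> reduced_edges V E" using assms(10) by (simp add: insert_commute)
  obtain d3 p3 q3 s3 where S3: "S3like V E c a d3 p3 q3 s3" using redge_S3like[OF ca] by blast
  obtain a' b' c' p q s where S: "S3like V E a' b' c' p q s" and eq: "{a',b',c'} = {a,b,c}"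
    using comb_main[OF K S1 S2 S3] by blast
  have rep: "EPG_rep V E P" and bnd: "\<And>v. v \<in> V \<Longrightarrow> bends (P v) \<le> 1"
    using assms(3) unfolding B1_EPG_rep_def by auto
  have gp: "\<And>v. v \<in> V \<Longrightarrow> grid_path (P v)" using rep unfolding EPG_rep_def by auto
  have par: "\<And>v. v \<in> V \<Longrightarrow> \<exists>pr. okp pr \<and> path_edges (P v) = pe pr"
    using path_params gp bnd by blast
  have sh: "\<And>u v pu pv. u \<in> V \<Longrightarrow> v \<in> V \<Longrightarrow> u \<noteq> v \<Longrightarrow> path_edges (P u) = pe pu \<Longrightarrow>
      path_edges (P v) = pe pv \<Longrightarrow> ({u,v} \<in> E \<longleftrightarrow> shp pu pv)"
    using rep pe_share unfolding EPG_rep_def by metis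
  from S have V6: "a' \<in> V" "b' \<in> V" "c' \<in> V" "p \<in> V" "q \<in> V" "s \<in> V"
    and D: "distinct [a',b',c',p,q,s]"
    and E1: "{a',b'} \<in> E" "{b',c'} \<in> E" "{a',c'} \<in> E"
      "{p,a'} \<in> E" "{p,b'} \<in> E" "{p,c'} \<notin> E"
      "{q,b'} \<in> E" "{q,c'} \<in> E" "{q,a'} \<notin> E"
      "{s,c'} \<in> E" "{s,a'} \<in> E" "{s,b'} \<notin> E"
      "{p,q} \<notin> E" "{q,s} \<notin> E" "{p,s} \<notin> E"
    unfolding S3like_def by auto
  obtain pa where pa: "okp pa" "path_edges (P a') = pe pa" using par[OF V6(1)] by blast
  obtain pb where pb: "okp pb" "path_edges (P b') = pe pb" using par[OF V6(2)] by blast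
  obtain pc where pc: "okp pc" "path_edges (P c') = pe pc" using par[OF V6(3)] by blast
  obtain pp where pp: "okp pp" "path_edges (P p) = pe pp" using par[OF V6(4)] by blast
  obtain pq where pq: "okp pq" "path_edges (P q) = pe pq" using par[OF V6(5)] by blast
  obtain ps where ps: "okp ps" "path_edges (P s) = pe ps" using par[OF V6(6)] by blast
  have Dd: "a' \<noteq> b'" "b' \<noteq> c'" "a' \<noteq> c'" "p \<noteq> a'" "p \<noteq> b'" "p \<noteq> c'"
    "q \<noteq> b'" "q \<noteq> c'" "q \<noteq> a'" "s \<noteq> c'" "s \<noteq> a'" "s \<noteq> b'" "p \<noteq> q" "q \<noteq> s" "p \<noteq> s"
    using D by auto
  have s1: "shp pa pb" using sh[OF V6(1) V6(2) Dd(1) pa(2) pb(2)] E1(1) by simp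
  have s2: "shp pb pc" using sh[OF V6(2) V6(3) Dd(2) pb(2) pc(2)] E1(2) by simp
  have s3: "shp pa pc" using sh[OF V6(1) V6(3) Dd(3) pa(2) pc(2)] E1(3) by simp
  have s4: "shp pp pa" using sh[OF V6(4) V6(1) Dd(4) pp(2) pa(2)] E1(4) by simp
  have s5: "shp pp pb" using sh[OF V6(4) V6(2) Dd(5) pp(2) pb(2)] E1(5) by simp
  have s6: "\<not> shp pp pc" using sh[OF V6(4) V6(3) Dd(6) pp(2) pc(2)] E1(6) by simp
  have s7: "shp pq pb" using sh[OF V6(5) V6(2) Dd(7) pq(2) pb(2)] E1(7) by simp
  have s8: "shp pq pc" using sh[OF V6(5) V6(3) Dd(8) pq(2) pc(2)] E1(8) by simp
  have s9: "\<not> shp pq pa" using sh[OF V6(5) V6(1) Dd(9) pq(2) pa(2)] E1(9) by simp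
  have s10: "shp ps pc" using sh[OF V6(6) V6(3) Dd(10) ps(2) pc(2)] E1(10) by simp
  have s11: "shp ps pa" using sh[OF V6(6) V6(1) Dd(11) ps(2) pa(2)] E1(11) by simp
  have s12: "\<not> shp ps pb" using sh[OF V6(6) V6(2) Dd(12) ps(2) pb(2)] E1(12) by simp
  have s13: "\<not> shp pp pq" using sh[OF V6(4) V6(5) Dd(13) pp(2) pq(2)] E1(13) by simp
  have s14: "\<not> shp pq ps" using sh[OF V6(5) V6(6) Dd(14) pq(2) ps(2)] E1(14) by simp
  have s15: "\<not> shp pp ps" using sh[OF V6(4) V6(6) Dd(15) pp(2) ps(2)] E1(15) by simp
  have nc: "\<not> cH pa pb pc \<and> \<not> cV pa pb pc"
    using keyB[OF pa(1) pb(1) pc(1) pp(1) pq(1) ps(1) s4 s5 s7 s8 s10 s11 s6 s9 s12 s13 s14 s15] .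
  then obtain X Y d where cl: "claw3 pa X Y d" "claw3 pb X Y d" "claw3 pc X Y d"
    using keyA[OF pa(1) pb(1) pc(1) s1 s2 s3] by blast
  have "form_claw_clique {P a', P b', P c'}"
    using claw_clique_from[OF pa(2) pb(2) pc(2) cl] .
  moreover have "{P a', P b', P c'} = {P a, P b, P c}"
  proof -
    have "{P a', P b', P c'} = P ` {a', b', c'}" by simp
    also have "\<dots> = P ` {a, b, c}" using eq by simp
    finally show ?thesis by simp
  qed
  ultimately show ?thesis by simp
qed

end
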